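(* Let $n\ge 1$, $N=\{1,\dots,n\}$, $0\le t_0<t_1$, $x_0\in\mathbb{R}^m$, and for each $k\in N$ let $U_k\subset C([t_0,t_1];\mathbb{R}^{m_k})$ be a set of admissible controls as described in the context (nonempty, closed, uniformly bounded by $M_k$, equicontinuous), which is in addition convex. Let $f\in Y$. For each $i\in N$ let $\boldsymbol{J}_i=(J^i_1,\dots,J^i_{d_i}):U_1\times\dots\times U_n\to\mathcal{I}(\mathbb{R})^{d_i}$ be the payoff $$\boldsymbol{J}_i(u_1,\dots,u_n)=\boldsymbol{\psi}_i(x(t_1))+\int_{t_0}^{t_1}\boldsymbol{L}_i(t,x(t),u_1(t),\dots,u_n(t))\,\mathrm{d}t,$$ where $x$ is the state generated by $(u_1,\dots,u_n)$. Suppose that for each $i\in N$ there exists $k_i\in\{1,\dots,d_i\}$ such that (i) $J^i_{k_i}:U_1\times\dots\times U_n\to\mathcal{I}(\mathbb{R})$ is continuous, and (ii) for each $u_{-i}\in U_{-i}=\prod_{j\ne i}U_j$, the map $u_i\mapsto J^i_{k_i}(u_i,u_{-i})$ is generalized $\mathcal{I}(\mathbb{R}_+)$-quasi-concave on $U_i$. Then the multi-objective interval differential game has at least one open-loop Pareto-Nash equilibrium, i.e. there exists $(u_1^*,\dots,u_n^* )\in U_1\times\dots\times U_n$ such that for every $i\in N$ and every $u_i\in U_i$, $\boldsymbol{J}_i(u_i^*,u_{-i}^* )\nprec\boldsymbol{J}_i(u_i,u_{-i}^* )$.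
   Context: Interval arithmetic: $\mathcal{I}(\mathbb{R})$ is the set of compact intervals $[\underline a,\overline a]$, $\mathcal{I}(\mathbb{R})^d$ the set of $d$-tuples of such intervals; addition is $[a,b]+[c,d]=[a+c,b+d]$ componentwise, and $\lambda[a,b]=[\min(\lambda a,\lambda b),\max(\lambda a,\lambda b)]$. The gH-difference is $[\underline a,\overline a]\ominus_{gH}[\underline b,\overline b]=[\min\{\underline a-\underline b,\overline a-\overline b\},\max\{\underline a-\underline b,\overline a-\overline b\}]$, taken componentwise for interval vectors. $\mathcal{I}(\mathbb{R}_+)$ is the set of compact intervals contained in $[0,+\infty)$, $\mathcal{I}(\mathbb{R}_+)^d$ the $d$-tuples of them, and $\mathrm{int}\,\mathcal{I}(\mathbb{R}_+)^d$ its interior (the $d$-tuples of compact intervals each contained in $(0,+\infty)$). For $\boldsymbol A,\boldsymbol B\in\mathcal{I}(\mathbb{R})^d$, $\boldsymbol B\prec\boldsymbol A$ means $\boldsymbol A\ominus_{gH}\boldsymbol B\in\mathrm{int}\,\mathcal{I}(\mathbb{R}_+)^d$; $\boldsymbol B\nprec\boldsymbol A$ means this fails. An interval-valued function $F$ on a Hausdorff space $\mathcal X$ is continuous if for each $x$ and $\epsilon>0$ there is an open neighbourhood $o(x)$ with $F(x')\ominus_{gH}F(x)\subset(-\epsilon,\epsilon)$ for all $x'\in o(x)$. For $\mathcal K$ a nonempty convex set, $F:\mathcal K\to\mathcal I(\mathbb R)$ is generalized $\mathcal{I}(\mathbb{R}_+)$-quasi-concave if for all $x_1,x_2\in\mathcal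 K$, $\boldsymbol A\in\mathcal I(\mathbb R)$, $\lambda\in[0,1]$: whenever $\boldsymbol A\ominus_{gH}F(x_j)\notin\mathrm{int}\,\mathcal I(\mathbb R_+)$ for $j=1,2$, then $\boldsymbol A\ominus_{gH}F(\lambda x_1+(1-\lambda)x_2)\notin\mathrm{int}\,\mathcal I(\mathbb R_+)$. Setting: $C([t_0,t_1];\mathbb{R}^{m_k})$ carries the norm $\|u\|=\max_{t}\|u(t)\|$; $U_1\times\dots\times U_n$ carries the product topology. Each $U_k$ is nonempty and closed, there is $M_k>0$ with $\|u_k\|\le M_k$ for all $u_k\in U_k$, and $U_k$ is equicontinuous (hence compact). $D=\{(t,x,u_1,\dots,u_n): t\in[t_0,t_1],x\in\mathbb R^m,\|u_k\|\le M_k\}$, and $Y$ is the set of continuous $f:D\to\mathbb R^m$ for which there are $M,L>0$ with $\sup_D\|f\|\le M$ and $\|f(t,x_1,u)-f(t,x_2,u)\|\le L\|x_1-x_2\|$. For $f\in Y$ and $u_k\in U_k$, the state $x$ is the unique solution of $\dot x(t)=f(t,x(t),u_1(t),\dots,u_n(t))$, $x(t_0)=x_0$. Here $\boldsymbol\psi_i:\mathbb R^m\to\mathcal I(\mathbb R)^{d_i}$ and $\boldsymbol L_i:[t_0,t_1]\times\mathbb R^m\times\mathbb R^{m_1}\times\dots\times\mathbb R^{m_n}\to\mathcal I(\mathbb R)^{d_i}$; the integral of an interval-vector-valued function is the Aumann integral, which for integrable bounded functions equals the vector of intervals $[\int\underline f_j,\int\overline f_j]$ of integrals of the endpoint functions.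 *)

theory Defs
  imports "HOL-Analysis.Analysis" "HOL-Library.Interval"
begin

text \<open>An interval vector of dimension d is a
function nat => real interval, whose components 1..d are relevant.\<close>

definition gH_diff :: "real interval \<Rightarrow> real interval \<Rightarrow> real interval" where
  "gH_diff A B = Ivl (min (lower A - lower B) (upper A - upper B))
                     (max (lower A - lower B) (upper A - upper B))"

definition in_int_Rplus :: "real interval \<Rightarrow> bool" where
  "in_int_Rplus A \<longleftrightarrow> lower A > 0"

text \<open>B strictly precedes A (d-dimensional interval vectors): A gH-minus B lies in int I(R_+)^d\<close>
definition ivl_prec :: "nat \<Rightarrow> (nat \<Rightarrow> real interval) \<Rightarrow> (nat \<Rightarrow> real interval) \<Rightarrow> bool" where
  "ivl_prec d B A \<longleftrightarrow> (\<forall>j\<in>{1..d}. in_int_Rplus (gH_diff (A j) (B j)))"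

definition aumann_integral :: "real \<Rightarrow> real \<Rightarrow> (real \<Rightarrow> real interval) \<Rightarrow> real interval" where
  "aumann_integral a b F = Ivl (integral {a..b} (\<lambda>t. lower (F t))) (integral {a..b} (\<lambda>t. upper (F t)))"

text \<open>A point of R^mk is represented as v :: nat => real with v j = 0 for j >= mk.\<close>
definition vnorm :: "nat \<Rightarrow> (nat \<Rightarrow> real) \<Rightarrow> real" where
  "vnorm mk v = sqrt (\<Sum>j<mk. (v j)\<^sup>2)"

definition is_vec :: "nat \<Rightarrow> (nat \<Rightarrow> real) \<Rightarrow> bool" where
  "is_vec mk v \<longleftrightarrow> (\<forall>j. mk \<le> j \<longrightarrow> v j = 0)"

text \<open>C([t0,t1]; R^mk): continuous functions on [t0,t1], extended by 0 outside.\<close>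
definition Cspace :: "real \<Rightarrow> real \<Rightarrow> nat \<Rightarrow> (real \<Rightarrow> nat \<Rightarrow> real) set" where
  "Cspace t0 t1 mk = {u. (\<forall>t\<in>{t0..t1}. is_vec mk (u t))
      \<and> (\<forall>j. continuous_on {t0..t1} (\<lambda>t. u t j))
      \<and> (\<forall>t. t \<notin> {t0..t1} \<longrightarrow> u t = (\<lambda>j. 0))}"

definition cnorm :: "real \<Rightarrow> real \<Rightarrow> nat \<Rightarrow> (real \<Rightarrow> nat \<Rightarrow> real) \<Rightarrow> real" where
  "cnorm t0 t1 mk u = (SUP t\<in>{t0..t1}. vnorm mk (u t))"

definition cdist :: "real \<Rightarrow> real \<Rightarrow> nat \<Rightarrow> (real \<Rightarrow> nat \<Rightarrow> real) \<Rightarrow> (real \<Rightarrow> nat \<Rightarrow> real) \<Rightarrow> real" where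
  "cdist t0 t1 mk u v = cnorm t0 t1 mk (\<lambda>t j. u t j - v t j)"

definition closed_ctrl :: "real \<Rightarrow> real \<Rightarrow> nat \<Rightarrow> (real \<Rightarrow> nat \<Rightarrow> real) set \<Rightarrow> bool" where
  "closed_ctrl t0 t1 mk U \<longleftrightarrow> (\<forall>s u. (\<forall>l. s l \<in> U) \<and> u \<in> Cspace t0 t1 mk
      \<and> (\<lambda>l. cdist t0 t1 mk (s l) u) \<longlonglongrightarrow> 0 \<longrightarrow> u \<in> U)"

definition equicont_ctrl :: "real \<Rightarrow> real \<Rightarrow> nat \<Rightarrow> (real \<Rightarrow> nat \<Rightarrow> real) set \<Rightarrow> bool" where
  "equicont_ctrl t0 t1 mk U \<longleftrightarrow> (\<forall>e>0. \<exists>\<delta>>0. \<forall>u\<in>U. \<forall>s\<in>{t0..t1}. \<forall>t\<in>{t0..t1}.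
      \<bar>s - t\<bar> < \<delta> \<longrightarrow> vnorm mk (\<lambda>j. u s j - u t j) < e)"

definition convex_ctrl :: "(real \<Rightarrow> nat \<Rightarrow> real) set \<Rightarrow> bool" where
  "convex_ctrl U \<longleftrightarrow> (\<forall>u\<in>U. \<forall>v\<in>U. \<forall>c\<in>{0..1::real}. (\<lambda>t j. c * u t j + (1 - c) * v t j) \<in> U)"

definition admissible_ctrl :: "real \<Rightarrow> real \<Rightarrow> nat \<Rightarrow> real \<Rightarrow> (real \<Rightarrow> nat \<Rightarrow> real) set \<Rightarrow> bool" where
  "admissible_ctrl t0 t1 mk Mk U \<longleftrightarrow> U \<noteq> {} \<and> U \<subseteq> Cspace t0 t1 mk \<and> closed_ctrl t0 t1 mk U
     \<and> (\<forall>u\<in>U. cnorm t0 t1 mk u \<le> Mk) \<and> equicont_ctrl t0 t1 mk U"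

definition profiles :: "nat \<Rightarrow> (nat \<Rightarrow> (real \<Rightarrow> nat \<Rightarrow> real) set) \<Rightarrow> (nat \<Rightarrow> real \<Rightarrow> nat \<Rightarrow> real) set" where
  "profiles n U = {u. (\<forall>k\<in>{1..n}. u k \<in> U k) \<and> (\<forall>k. k \<notin> {1..n} \<longrightarrow> u k = (\<lambda>t j. 0))}"

definition pdist :: "real \<Rightarrow> real \<Rightarrow> nat \<Rightarrow> (nat \<Rightarrow> nat) \<Rightarrow> (nat \<Rightarrow> real \<Rightarrow> nat \<Rightarrow> real) \<Rightarrow> (nat \<Rightarrow> real \<Rightarrow> nat \<Rightarrow> real) \<Rightarrow> real" where
  "pdist t0 t1 n m u v = (\<Sum>k\<in>{1..n}. cdist t0 t1 (m k) (u k) (v k))"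

definition domD :: "real \<Rightarrow> real \<Rightarrow> nat \<Rightarrow> (nat \<Rightarrow> nat) \<Rightarrow> (nat \<Rightarrow> real)
    \<Rightarrow> (real \<times> (real^'m) \<times> (nat \<Rightarrow> nat \<Rightarrow> real)) set" where
  "domD t0 t1 n m M = {(t, x, w). t \<in> {t0..t1} \<and> (\<forall>k\<in>{1..n}. is_vec (m k) (w k) \<and> vnorm (m k) (w k) \<le> M k)
       \<and> (\<forall>k. k \<notin> {1..n} \<longrightarrow> w k = (\<lambda>j. 0))}"

definition Ddist :: "nat \<Rightarrow> (nat \<Rightarrow> nat) \<Rightarrow> real \<times> (real^'m) \<times> (nat \<Rightarrow> nat \<Rightarrow> real)
    \<Rightarrow> real \<times> (real^'m) \<times> (nat \<Rightarrow> nat \<Rightarrow> real) \<Rightarrow> real" where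
  "Ddist n m p q = (case p of (t, x, w) \<Rightarrow> case q of (s, y, v) \<Rightarrow>
       \<bar>t - s\<bar> + norm (x - y) + (\<Sum>k\<in>{1..n}. vnorm (m k) (\<lambda>j. w k j - v k j)))"

definition classY :: "real \<Rightarrow> real \<Rightarrow> nat \<Rightarrow> (nat \<Rightarrow> nat) \<Rightarrow> (nat \<Rightarrow> real)
    \<Rightarrow> (real \<Rightarrow> real^'m \<Rightarrow> (nat \<Rightarrow> nat \<Rightarrow> real) \<Rightarrow> real^'m) \<Rightarrow> bool" where
  "classY t0 t1 n m M f \<longleftrightarrow>
     (\<forall>p\<in>domD t0 t1 n m M. \<forall>e>0. \<exists>\<delta>>0. \<forall>q\<in>domD t0 t1 n m M.
         Ddist n m q p < \<delta> \<longrightarrow> norm (case_prod (\<lambda>t. case_prod (f t)) q - case_prod (\<lambda>t. case_prod (f t)) p) < e)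
   \<and> (\<exists>B>0. \<forall>(t, x, w)\<in>domD t0 t1 n m M. norm (f t x w) \<le> B)
   \<and> (\<exists>L>0. \<forall>(t, x, w)\<in>domD t0 t1 n m M. \<forall>y. norm (f t x w - f t y w) \<le> L * norm (x - y))"

definition state :: "real \<Rightarrow> real \<Rightarrow> real^'m \<Rightarrow> (real \<Rightarrow> real^'m \<Rightarrow> (nat \<Rightarrow> nat \<Rightarrow> real) \<Rightarrow> real^'m)
    \<Rightarrow> (nat \<Rightarrow> real \<Rightarrow> nat \<Rightarrow> real) \<Rightarrow> real \<Rightarrow> real^'m" where
  "state t0 t1 x0 f u = (THE x. x t0 = x0 \<and>
      (\<forall>t\<in>{t0..t1}. (x has_vector_derivative f t (x t) (\<lambda>k. u k t)) (at t within {t0..t1}))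
      \<and> (\<forall>t. t \<notin> {t0..t1} \<longrightarrow> x t = x0))"

definition payoff :: "real \<Rightarrow> real \<Rightarrow> real^'m \<Rightarrow> (real \<Rightarrow> real^'m \<Rightarrow> (nat \<Rightarrow> nat \<Rightarrow> real) \<Rightarrow> real^'m)
    \<Rightarrow> (real^'m \<Rightarrow> nat \<Rightarrow> real interval)
    \<Rightarrow> (real \<Rightarrow> real^'m \<Rightarrow> (nat \<Rightarrow> nat \<Rightarrow> real) \<Rightarrow> nat \<Rightarrow> real interval)
    \<Rightarrow> (nat \<Rightarrow> real \<Rightarrow> nat \<Rightarrow> real) \<Rightarrow> nat \<Rightarrow> real interval" where
  "payoff t0 t1 x0 f psi L u = (let x = state t0 t1 x0 f u in
     (\<lambda>j. psi (x t1) j + aumann_integral t0 t1 (\<lambda>t. L t (x t) (\<lambda>k. u k t) j)))"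

definition ivl_continuous_on :: "('a \<Rightarrow> 'a \<Rightarrow> real) \<Rightarrow> 'a set \<Rightarrow> ('a \<Rightarrow> real interval) \<Rightarrow> bool" where
  "ivl_continuous_on dst S F \<longleftrightarrow> (\<forall>x\<in>S. \<forall>e>0. \<exists>\<delta>>0. \<forall>x'\<in>S. dst x' x < \<delta> \<longrightarrow>
      set_of (gH_diff (F x') (F x)) \<subseteq> {-e<..<e})"

definition gen_quasi_concave :: "(real \<Rightarrow> 'a \<Rightarrow> 'a \<Rightarrow> 'a) \<Rightarrow> 'a set \<Rightarrow> ('a \<Rightarrow> real interval) \<Rightarrow> bool" where
  "gen_quasi_concave comb K F \<longleftrightarrow> (\<forall>x1\<in>K. \<forall>x2\<in>K. \<forall>A. \<forall>c\<in>{0..1}.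
      \<not> in_int_Rplus (gH_diff A (F x1)) \<and> \<not> in_int_Rplus (gH_diff A (F x2))
      \<longrightarrow> \<not> in_int_Rplus (gH_diff A (F (comb c x1 x2))))"

definition ctrl_comb :: "real \<Rightarrow> (real \<Rightarrow> nat \<Rightarrow> real) \<Rightarrow> (real \<Rightarrow> nat \<Rightarrow> real) \<Rightarrow> (real \<Rightarrow> nat \<Rightarrow> real)" where
  "ctrl_comb c u v = (\<lambda>t j. c * u t j + (1 - c) * v t j)"

end

theory Submission
  imports Defs "HOL-Complex_Analysis.Great_Picard"
begin

lemma common_subseq_aux:
  fixes P :: "'a \<Rightarrow> (nat \<Rightarrow> nat) \<Rightarrow> bool"
  assumes "finite J" "J \<subseteq> I"
    and ex: "\<And>a r. a \<in> I \<Longrightarrow> strict_mono r \<Longrightarrow> \<exists>k::nat\<Rightarrow>nat. strict_mono k \<and> P a (r \<circ> k)"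
    and mono: "\<And>a r (k::nat\<Rightarrow>nat). a \<in> I \<Longrightarrow> P a r \<Longrightarrow> strict_mono k \<Longrightarrow> P a (r \<circ> k)"
  shows "\<exists>r. strict_mono r \<and> (\<forall>a\<in>J. P a r)"
  using assms(1,2)
proof (induction J rule: finite_induct)
  case empty
  have "strict_mono (id::nat\<Rightarrow>nat)" by (simp add: strict_mono_def)
  then show ?case by blast
next
  case (insert a J)
  then obtain r where r: "strict_mono r" "\<forall>b\<in>J. P b r" by blast
  obtain k where k: "strict_mono k" "P a (r \<circ> k)" using ex[of a r] insert.prems r(1) by blast
  have "strict_mono (r \<circ> k)" using r(1) k(1) by (simp add: strict_mono_o)
  moreover have "\<forall>b\<in>insert a J. P b (r \<circ> k)"
    using k r mono insert.prems by blast
  ultimately show ?case by blast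
qed

lemma common_subseq:
  fixes P :: "'a \<Rightarrow> (nat \<Rightarrow> nat) \<Rightarrow> bool"
  assumes "finite I"
    and "\<And>a r. a \<in> I \<Longrightarrow> strict_mono r \<Longrightarrow> \<exists>k::nat\<Rightarrow>nat. strict_mono k \<and> P a (r \<circ> k)"
    and "\<And>a r (k::nat\<Rightarrow>nat). a \<in> I \<Longrightarrow> P a r \<Longrightarrow> strict_mono k \<Longrightarrow> P a (r \<circ> k)"
  shows "\<exists>r. strict_mono r \<and> (\<forall>a\<in>I. P a r)"
  using common_subseq_aux[OF assms(1) subset_refl, of P] assms by blast

definition cube :: "nat \<Rightarrow> (nat \<Rightarrow> real) \<Rightarrow> bool" where
  "cube N x \<longleftrightarrow> (\<forall>l<N. 0 \<le> x l \<and> x l \<le> 1)"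

lemma brouwer_nat:
  fixes F :: "(nat \<Rightarrow> real) \<Rightarrow> nat \<Rightarrow> real"
  assumes maps: "\<And>x. cube N x \<Longrightarrow> cube N (F x)"
  and cont: "\<And>x y l. cube N x \<Longrightarrow> (\<And>p. cube N (y p)) \<Longrightarrow> (\<And>l. l<N \<Longrightarrow> (\<lambda>p. y p l) \<longlonglongrightarrow> x l)
               \<Longrightarrow> l < N \<Longrightarrow> (\<lambda>p. F (y p) l) \<longlonglongrightarrow> F x l"
  shows "\<exists>x. cube N x \<and> (\<forall>l<N. F x l = x l)"
proof -
  define vec where "vec = (\<lambda>(P::nat) (x::nat\<Rightarrow>nat) l. real (x l) / real P)"
  define lab where "lab = (\<lambda>P x i. if x i = 0 \<or> vec P x i < F (vec P x) i then 0 else (1::nat))"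
  have vcube: "cube N (vec (Suc p) x)" if "\<forall>j<N. x j \<le> Suc p" for p x
    using that by (auto simp: cube_def vec_def)
  have lab0: "vec (Suc p) x i \<le> F (vec (Suc p) x) i" if "lab (Suc p) x i = 0" "\<forall>j<N. x j \<le> Suc p" "i < N" for p x i
  proof (cases "x i = 0")
    case True
    then show ?thesis using maps[OF vcube[OF that(2)]] that(3) by (auto simp: cube_def vec_def)
  next
    case False
    then show ?thesis using that(1) by (auto simp: lab_def split: if_splits)
  qed
  have lab1: "F (vec (Suc p) x) i \<le> vec (Suc p) x i" if "lab (Suc p) x i \<noteq> 0" for p x i
    using that by (auto simp: lab_def split: if_splits)
  have kuhn: "\<exists>q. (\<forall>i<N. q i < Suc p) \<and> (\<forall>i<N. \<exists>r s. (\<forall>j<N. q j \<le> r j \<and> r j \<le> q j + 1) \<and>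
          (\<forall>j<N. q j \<le> s j \<and> s j \<le> q j + 1) \<and> lab (Suc p) r i = 0 \<and> lab (Suc p) s i \<noteq> 0)" for p
  proof -
    have a2: "\<forall>x. (\<forall>i<N. x i \<le> Suc p) \<longrightarrow> (\<forall>i<N. lab (Suc p) x i = (0::nat) \<or> lab (Suc p) x i = 1)"
      by (auto simp: lab_def)
    have a3: "\<forall>x. (\<forall>i<N. x i \<le> Suc p) \<longrightarrow> (\<forall>i<N. x i = 0 \<longrightarrow> lab (Suc p) x i = 0)"
      by (auto simp: lab_def)
    have a4: "\<forall>x. (\<forall>i<N. x i \<le> Suc p) \<longrightarrow> (\<forall>i<N. x i = Suc p \<longrightarrow> lab (Suc p) x i = 1)"
    proof (intro allI impI)
      fix x i assume x: "\<forall>i<N. x i \<le> Suc p" and i: "i < N" "x i = Suc p"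
      have "vec (Suc p) x i = 1" using i by (simp add: vec_def)
      moreover have "F (vec (Suc p) x) i \<le> 1" using maps[OF vcube[OF x]] i by (auto simp: cube_def)
      ultimately show "lab (Suc p) x i = 1" using i by (auto simp: lab_def)
    qed
    obtain q where q: "\<forall>i<N. q i < Suc p"
      "\<forall>i<N. \<exists>r s. (\<forall>j<N. q j \<le> r j \<and> r j \<le> q j + 1) \<and> (\<forall>j<N. q j \<le> s j \<and> s j \<le> q j + 1) \<and> lab (Suc p) r i \<noteq> lab (Suc p) s i"
      using kuhn_lemma[of "Suc p" N "lab (Suc p)"] a2 a3 a4 by blast
    show ?thesis
    proof (rule exI[of _ q], intro conjI allI impI)
      show "\<And>i. i < N \<Longrightarrow> q i < Suc p" using q(1) by blast
      fix i assume i: "i < N"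
      obtain r s where rs: "\<forall>j<N. q j \<le> r j \<and> r j \<le> q j + 1" "\<forall>j<N. q j \<le> s j \<and> s j \<le> q j + 1"
        "lab (Suc p) r i \<noteq> lab (Suc p) s i" using q(2) i by blast
      show "\<exists>r s. (\<forall>j<N. q j \<le> r j \<and> r j \<le> q j + 1) \<and>
          (\<forall>j<N. q j \<le> s j \<and> s j \<le> q j + 1) \<and> lab (Suc p) r i = 0 \<and> lab (Suc p) s i \<noteq> 0"
      proof (cases "lab (Suc p) r i = 0")
        case True
        then have "lab (Suc p) s i \<noteq> 0" using rs(3) by simp
        then show ?thesis using rs(1,2) True by (intro exI[of _ r] exI[of _ s]) simp
      next
        case False
        have l01: "lab (Suc p) y i = 0 \<or> lab (Suc p) y i = 1" for y by (simp add: lab_def)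
        have "lab (Suc p) s i = 0" using rs(3) False l01[of r] l01[of s] by simp
        then show ?thesis using rs(1,2) False by (intro exI[of _ s] exI[of _ r]) simp
      qed
    qed
  qed
  have "\<forall>p. \<exists>q. (\<forall>i<N. q i < Suc p) \<and> (\<forall>i<N. \<exists>r s. (\<forall>j<N. q j \<le> r j \<and> r j \<le> q j + 1) \<and>
          (\<forall>j<N. q j \<le> s j \<and> s j \<le> q j + 1) \<and> lab (Suc p) r i = 0 \<and> lab (Suc p) s i \<noteq> 0)"
    by (intro allI kuhn)
  from choice[OF this] obtain Q where Q0: "\<forall>p. (\<forall>i<N. Q p i < Suc p) \<and> (\<forall>i<N. \<exists>r s. (\<forall>j<N. Q p j \<le> r j \<and> r j \<le> Q p j + 1) \<and>
          (\<forall>j<N. Q p j \<le> s j \<and> s j \<le> Q p j + 1) \<and> lab (Suc p) r i = 0 \<and> lab (Suc p) s i \<noteq> 0)"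
    by blast
  have Q1: "\<forall>i<N. Q p i < Suc p" for p using Q0 by blast
  have "\<forall>pi. \<exists>rs. snd pi < N \<longrightarrow> (\<forall>j<N. Q (fst pi) j \<le> fst rs j \<and> fst rs j \<le> Q (fst pi) j + 1) \<and>
          (\<forall>j<N. Q (fst pi) j \<le> snd rs j \<and> snd rs j \<le> Q (fst pi) j + 1) \<and>
          lab (Suc (fst pi)) (fst rs) (snd pi) = 0 \<and> lab (Suc (fst pi)) (snd rs) (snd pi) \<noteq> 0"
  proof
    fix pi :: "nat \<times> nat"
    show "\<exists>rs. snd pi < N \<longrightarrow> (\<forall>j<N. Q (fst pi) j \<le> fst rs j \<and> fst rs j \<le> Q (fst pi) j + 1) \<and>
          (\<forall>j<N. Q (fst pi) j \<le> snd rs j \<and> snd rs j \<le> Q (fst pi) j + 1) \<and>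
          lab (Suc (fst pi)) (fst rs) (snd pi) = 0 \<and> lab (Suc (fst pi)) (snd rs) (snd pi) \<noteq> 0"
    proof (cases "snd pi < N")
      case True
      then obtain r s where "(\<forall>j<N. Q (fst pi) j \<le> r j \<and> r j \<le> Q (fst pi) j + 1) \<and>
          (\<forall>j<N. Q (fst pi) j \<le> s j \<and> s j \<le> Q (fst pi) j + 1) \<and>
          lab (Suc (fst pi)) r (snd pi) = 0 \<and> lab (Suc (fst pi)) s (snd pi) \<noteq> 0"
        using Q0 by blast
      then show ?thesis by (intro exI[of _ "(r, s)"]) simp
    qed simp
  qed
  from choice[OF this] obtain RS where RS: "\<forall>pi. snd pi < N \<longrightarrow> (\<forall>j<N. Q (fst pi) j \<le> fst (RS pi) j \<and> fst (RS pi) j \<le> Q (fst pi) j + 1) \<and>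
          (\<forall>j<N. Q (fst pi) j \<le> snd (RS pi) j \<and> snd (RS pi) j \<le> Q (fst pi) j + 1) \<and>
          lab (Suc (fst pi)) (fst (RS pi)) (snd pi) = 0 \<and> lab (Suc (fst pi)) (snd (RS pi)) (snd pi) \<noteq> 0"
    by blast
  define A where "A = (\<lambda>p i. fst (RS (p, i)))"
  define B where "B = (\<lambda>p i. snd (RS (p, i)))"
  have AB: "(\<forall>j<N. Q p j \<le> A p i j \<and> A p i j \<le> Q p j + 1) \<and>
          (\<forall>j<N. Q p j \<le> B p i j \<and> B p i j \<le> Q p j + 1) \<and> lab (Suc p) (A p i) i = 0 \<and> lab (Suc p) (B p i) i \<noteq> 0"
    if "i < N" for p i
    using RS[rule_format, of "(p, i)"] that unfolding A_def B_def by simp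
  define z where "z = (\<lambda>p. vec (Suc p) (Q p))"
  have zc: "cube N (z p)" for p using Q1[of p] by (auto simp: z_def intro!: vcube)
  have "\<exists>r. strict_mono r \<and> (\<forall>l\<in>{..<N}. \<exists>c. (\<lambda>p. z (r p) l) \<longlonglongrightarrow> c)"
  proof (rule common_subseq)
    fix l r assume l: "l \<in> {..<N}" and r: "strict_mono (r::nat\<Rightarrow>nat)"
    have "bounded (range (\<lambda>p. z (r p) l))"
      using zc l unfolding bounded_iff cube_def by (intro exI[of _ 1]) auto
    then obtain c k where k: "strict_mono k" and c: "((\<lambda>p. z (r p) l) \<circ> k) \<longlonglongrightarrow> c"
      using bounded_imp_convergent_subsequence by blast
    from c have "(\<lambda>p. z ((r \<circ> k) p) l) \<longlonglongrightarrow> c" by (simp add: comp_def)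
    then show "\<exists>k::nat\<Rightarrow>nat. strict_mono k \<and> (\<exists>c. (\<lambda>p. z ((r \<circ> k) p) l) \<longlonglongrightarrow> c)"
      using k by blast
  next
    fix l r k assume c: "\<exists>c. (\<lambda>p. z (r p) l) \<longlonglongrightarrow> c" and k: "strict_mono (k::nat\<Rightarrow>nat)"
    from c obtain c where c: "(\<lambda>p. z (r p) l) \<longlonglongrightarrow> c" by blast
    have "((\<lambda>p. z (r p) l) \<circ> k) \<longlonglongrightarrow> c" by (rule LIMSEQ_subseq_LIMSEQ[OF c k])
    then have "(\<lambda>p. z ((r \<circ> k) p) l) \<longlonglongrightarrow> c" by (simp add: comp_def)
    then show "\<exists>c. (\<lambda>p. z ((r \<circ> k) p) l) \<longlonglongrightarrow> c" by blast
  qed auto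
  then obtain r where r: "strict_mono r" "\<forall>l\<in>{..<N}. \<exists>c. (\<lambda>p. z (r p) l) \<longlonglongrightarrow> c" by blast
  define x where "x = (\<lambda>l. lim (\<lambda>p. z (r p) l))"
  have x: "(\<lambda>p. z (r p) l) \<longlonglongrightarrow> x l" if "l < N" for l
    using r(2) that unfolding x_def by (auto simp: convergent_def convergent_LIMSEQ_iff[symmetric])
  have xc: "cube N x"
    unfolding cube_def
  proof (intro allI impI conjI)
    fix l assume l: "l < N"
    show "0 \<le> x l" using x[OF l] zc l by (intro LIMSEQ_le_const[of _ _ 0]) (auto simp: cube_def)
    show "x l \<le> 1" using x[OF l] zc l by (intro LIMSEQ_le_const2[of _ _ 1]) (auto simp: cube_def)
  qed
  have inv0: "(\<lambda>p. 1 / real (Suc (r p))) \<longlonglongrightarrow> 0"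
    using LIMSEQ_subseq_LIMSEQ[OF LIMSEQ_inverse_real_of_nat r(1)] by (simp add: o_def inverse_eq_divide)
  have near: "(\<lambda>p. vec (Suc (r p)) (G p) l) \<longlonglongrightarrow> x l"
    if G: "\<And>p. \<forall>j<N. Q (r p) j \<le> G p j \<and> G p j \<le> Q (r p) j + 1" and l: "l < N"
    for G :: "nat \<Rightarrow> nat \<Rightarrow> nat" and l
  proof -
    have "(\<lambda>p. vec (Suc (r p)) (G p) l - z (r p) l) \<longlonglongrightarrow> 0"
    proof (rule Lim_null_comparison[OF _ inv0])
      show "\<forall>\<^sub>F p in sequentially. norm (vec (Suc (r p)) (G p) l - z (r p) l) \<le> 1 / real (Suc (r p))"
      proof (rule always_eventually, rule allI)
        fix p
        have "Q (r p) l \<le> G p l" "G p l \<le> Q (r p) l + 1" using G[of p] l by auto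
        then have "\<bar>real (G p l) - real (Q (r p) l)\<bar> \<le> 1" by linarith
        then show "norm (vec (Suc (r p)) (G p) l - z (r p) l) \<le> 1 / real (Suc (r p))"
          by (simp add: vec_def z_def diff_divide_distrib[symmetric] abs_div)
             (simp add: divide_right_mono)
      qed
    qed
    from tendsto_add[OF this x[OF l]] show ?thesis by simp
  qed
  have "F x i = x i" if i: "i < N" for i
  proof -
    define ya where "ya = (\<lambda>p. vec (Suc (r p)) (A (r p) i))"
    define yb where "yb = (\<lambda>p. vec (Suc (r p)) (B (r p) i))"
    have Ab: "\<forall>j<N. Q (r p) j \<le> A (r p) i j \<and> A (r p) i j \<le> Q (r p) j + 1" for p using AB[OF i] by blast
    have Bb: "\<forall>j<N. Q (r p) j \<le> B (r p) i j \<and> B (r p) i j \<le> Q (r p) j + 1" for p using AB[OF i] by blast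
    have Ale: "\<forall>j<N. A (r p) i j \<le> Suc (r p)" for p using Ab[of p] Q1[of "r p"] by fastforce
    have Ble: "\<forall>j<N. B (r p) i j \<le> Suc (r p)" for p using Bb[of p] Q1[of "r p"] by fastforce
    have yac: "cube N (ya p)" for p unfolding ya_def by (rule vcube[OF Ale])
    have ybc: "cube N (yb p)" for p unfolding yb_def by (rule vcube[OF Ble])
    have yal: "(\<lambda>p. ya p l) \<longlonglongrightarrow> x l" if "l < N" for l
      unfolding ya_def using near[of "\<lambda>p. A (r p) i", OF Ab that] .
    have ybl: "(\<lambda>p. yb p l) \<longlonglongrightarrow> x l" if "l < N" for l
      unfolding yb_def using near[of "\<lambda>p. B (r p) i", OF Bb that] .
    have Fa: "(\<lambda>p. F (ya p) i) \<longlonglongrightarrow> F x i" by (rule cont[OF xc yac yal i])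
    have Fb: "(\<lambda>p. F (yb p) i) \<longlonglongrightarrow> F x i" by (rule cont[OF xc ybc ybl i])
    have la: "ya p i \<le> F (ya p) i" for p
      unfolding ya_def using lab0[OF _ Ale i] AB[OF i] by blast
    have lb: "F (yb p) i \<le> yb p i" for p
      unfolding yb_def using lab1 AB[OF i] by blast
    have "x i \<le> F x i" using LIMSEQ_le[OF yal[OF i] Fa] la by blast
    moreover have "F x i \<le> x i" using LIMSEQ_le[OF Fb ybl[OF i]] lb by blast
    ultimately show ?thesis by simp
  qed
  then show ?thesis using xc by blast
qed

lemma lower_Ivl': "(a::real) \<le> b \<Longrightarrow> lower (Ivl a b) = a" by (simp add: Ivl.rep_eq lower.rep_eq)
lemma upper_Ivl': "upper (Ivl (a::real) b) = b" by (simp add: Ivl.rep_eq upper.rep_eq)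

lemma gH_lower: "lower (gH_diff A B) = min (lower A - lower B) (upper A - upper B)"
  unfolding gH_diff_def by (rule lower_Ivl') simp
lemma gH_upper: "upper (gH_diff A B) = max (lower A - lower B) (upper A - upper B)"
  unfolding gH_diff_def by (rule upper_Ivl')

lemma in_int_gH: "in_int_Rplus (gH_diff A B) \<longleftrightarrow> lower A > lower B \<and> upper A > upper B"
  unfolding in_int_Rplus_def gH_lower by auto

lemma ivl_cont_lu:
  assumes "ivl_continuous_on dst S F" "x \<in> S" "e > 0"
  shows "\<exists>\<delta>>0. \<forall>x'\<in>S. dst x' x < \<delta> \<longrightarrow> \<bar>lower (F x') - lower (F x)\<bar> < e \<and> \<bar>upper (F x') - upper (F x)\<bar> < e"
proof -
  obtain \<delta> where d: "\<delta> > 0" "\<forall>x'\<in>S. dst x' x < \<delta> \<longrightarrow> set_of (gH_diff (F x') (F x)) \<subseteq> {-e<..<e}"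
    using assms unfolding ivl_continuous_on_def by blast
  show ?thesis
  proof (intro exI conjI ballI impI)
    fix x' assume "x' \<in> S" "dst x' x < \<delta>"
    then have sub: "set_of (gH_diff (F x') (F x)) \<subseteq> {-e<..<e}" using d by blast
    have "lower (gH_diff (F x') (F x)) \<in> set_of (gH_diff (F x') (F x))"
         "upper (gH_diff (F x') (F x)) \<in> set_of (gH_diff (F x') (F x))"
      unfolding set_of_eq using lower_le_upper[of "gH_diff (F x') (F x)"] by auto
    then have "lower (gH_diff (F x') (F x)) \<in> {-e<..<e}" "upper (gH_diff (F x') (F x)) \<in> {-e<..<e}"
      using sub by blast+
    then show "\<bar>lower (F x') - lower (F x)\<bar> < e" "\<bar>upper (F x') - upper (F x)\<bar> < e"
      unfolding gH_lower gH_upper by auto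
  qed (use d in auto)
qed

lemma qc_bounds:
  assumes qc: "gen_quasi_concave ctrl_comb K F" and x: "x1 \<in> K" "x2 \<in> K" and c: "c \<in> {0..1}"
  shows "min (lower (F x1)) (lower (F x2)) \<le> lower (F (ctrl_comb c x1 x2))"
    and "min (upper (F x1)) (upper (F x2)) \<le> upper (F (ctrl_comb c x1 x2))"
proof -
  let ?z = "ctrl_comb c x1 x2"
  define m where "m = min (lower (F x1)) (lower (F x2))"
  define A where "A = Ivl m (max m (upper (F ?z) + 1))"
  have lA: "lower A = m" and uA: "upper A = max m (upper (F ?z) + 1)"
    unfolding A_def by (simp_all add: lower_Ivl' upper_Ivl')
  have "\<not> in_int_Rplus (gH_diff A (F x1))" "\<not> in_int_Rplus (gH_diff A (F x2))"
    unfolding in_int_gH lA m_def by auto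
  then have "\<not> in_int_Rplus (gH_diff A (F ?z))" using qc x c unfolding gen_quasi_concave_def by blast
  then show "min (lower (F x1)) (lower (F x2)) \<le> lower (F ?z)"
    unfolding in_int_gH lA uA m_def by auto
next
  let ?z = "ctrl_comb c x1 x2"
  define m where "m = min (upper (F x1)) (upper (F x2))"
  define A where "A = Ivl m m"
  have lA: "lower A = m" and uA: "upper A = m"
    unfolding A_def by (simp_all add: lower_Ivl' upper_Ivl')
  have "\<not> in_int_Rplus (gH_diff A (F x1))" "\<not> in_int_Rplus (gH_diff A (F x2))"
    unfolding in_int_gH uA m_def by auto
  then have "\<not> in_int_Rplus (gH_diff A (F ?z))" using qc x c unfolding gen_quasi_concave_def by blast
  then show "min (upper (F x1)) (upper (F x2)) \<le> upper (F ?z)"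
    unfolding in_int_gH lA uA m_def using lower_le_upper[of "F ?z"] by linarith
qed

lemma conv_comb:
  assumes C: "\<And>x y c. x \<in> C \<Longrightarrow> y \<in> C \<Longrightarrow> 0 \<le> c \<Longrightarrow> c \<le> 1 \<Longrightarrow> ctrl_comb c x y \<in> C"
    and I: "finite I" and x0: "x0 \<in> C" and X: "\<And>l. l \<in> I \<Longrightarrow> X l \<in> C"
    and w: "\<And>l. l \<in> I \<Longrightarrow> 0 \<le> w l" "sum w I \<le> 1"
  shows "(\<lambda>t j. (1 - sum w I) * x0 t j + (\<Sum>l\<in>I. w l * X l t j)) \<in> C"
  using I X w
proof (induction I arbitrary: w rule: finite_induct)
  case empty
  then show ?case using x0 by simp
next
  case (insert a I)
  have wa: "0 \<le> w a" using insert.prems by simp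
  have sI: "0 \<le> sum w I" using insert.prems by (intro sum_nonneg) auto
  have tot: "w a + sum w I \<le> 1" using insert.prems insert.hyps by simp
  show ?case
  proof (cases "w a = 1")
    case True
    then have "sum w I = 0" using tot sI by simp
    then have z: "\<forall>l\<in>I. w l = 0" using insert.prems insert.hyps by (subst (asm) sum_nonneg_eq_0_iff) auto
    have "(\<lambda>t j. (1 - sum w (insert a I)) * x0 t j + (\<Sum>l\<in>insert a I. w l * X l t j)) = X a"
      using True z insert.hyps by (simp add: \<open>sum w I = 0\<close>)
    then show ?thesis using insert.prems by simp
  next
    case False
    define c where "c = 1 - w a"
    have c: "0 < c" "c \<le> 1" using False wa tot sI unfolding c_def by auto
    define w' where "w' = (\<lambda>l. w l / c)"
    have sw': "sum w' I = sum w I / c" unfolding w'_def by (simp add: sum_divide_distrib)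
    have "sum w' I \<le> 1" unfolding sw' using c tot by (simp add: c_def divide_le_eq_1)
    moreover have "\<And>l. l \<in> I \<Longrightarrow> 0 \<le> w' l" unfolding w'_def using c insert.prems by simp
    ultimately have y: "(\<lambda>t j. (1 - sum w' I) * x0 t j + (\<Sum>l\<in>I. w' l * X l t j)) \<in> C"
      using insert.IH insert.prems by simp
    have "ctrl_comb c (\<lambda>t j. (1 - sum w' I) * x0 t j + (\<Sum>l\<in>I. w' l * X l t j)) (X a) \<in> C"
      using C[OF y _ ] insert.prems c by simp
    moreover have "ctrl_comb c (\<lambda>t j. (1 - sum w' I) * x0 t j + (\<Sum>l\<in>I. w' l * X l t j)) (X a)
       = (\<lambda>t j. (1 - sum w (insert a I)) * x0 t j + (\<Sum>l\<in>insert a I. w l * X l t j))"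
    proof (intro ext)
      fix t j
      have e1: "c * (\<Sum>l\<in>I. w' l * X l t j) = (\<Sum>l\<in>I. w l * X l t j)"
        unfolding sum_distrib_left w'_def using c by (intro sum.cong) auto
      have e2: "c * (1 - sum w' I) = c - sum w I" unfolding sw' using c by (simp add: field_simps)
      have "ctrl_comb c (\<lambda>t j. (1 - sum w' I) * x0 t j + (\<Sum>l\<in>I. w' l * X l t j)) (X a) t j
          = c * (1 - sum w' I) * x0 t j + c * (\<Sum>l\<in>I. w' l * X l t j) + (1 - c) * X a t j"
        unfolding ctrl_comb_def by (simp add: algebra_simps)
      also have "\<dots> = (c - sum w I) * x0 t j + (\<Sum>l\<in>I. w l * X l t j) + w a * X a t j"
        by (simp only: e1 e2) (simp add: c_def)
      also have "\<dots> = (1 - sum w (insert a I)) * x0 t j + (\<Sum>l\<in>insert a I. w l * X l t j)"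
        using insert.hyps by (simp add: c_def algebra_simps)
      finally show "ctrl_comb c (\<lambda>t j. (1 - sum w' I) * x0 t j + (\<Sum>l\<in>I. w' l * X l t j)) (X a) t j
          = (1 - sum w (insert a I)) * x0 t j + (\<Sum>l\<in>insert a I. w l * X l t j)" .
    qed
    ultimately show ?thesis by simp
  qed
qed

lemma conv_comb1:
  assumes C: "\<And>x y c. x \<in> C \<Longrightarrow> y \<in> C \<Longrightarrow> 0 \<le> c \<Longrightarrow> c \<le> 1 \<Longrightarrow> ctrl_comb c x y \<in> C"
    and I: "finite I" "a \<in> I" and X: "\<And>l. l \<in> I \<Longrightarrow> X l \<in> C"
    and w: "\<And>l. l \<in> I \<Longrightarrow> 0 \<le> w l" "sum w I = 1"
  shows "(\<lambda>t j. (\<Sum>l\<in>I. w l * X l t j)) \<in> C"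
  using conv_comb[OF C I(1) X[OF I(2)] X, where w=w] w by simp

lemma vnorm_nonneg: "0 \<le> vnorm mk v"
  by (simp add: vnorm_def sum_nonneg)

lemma abs_le_vnorm: "j < mk \<Longrightarrow> \<bar>v j\<bar> \<le> vnorm mk v"
  unfolding vnorm_def
proof -
  assume j: "j < mk"
  have "(v j)\<^sup>2 \<le> (\<Sum>j<mk. (v j)\<^sup>2)" using j by (intro member_le_sum) auto
  then have "sqrt ((v j)\<^sup>2) \<le> sqrt (\<Sum>j<mk. (v j)\<^sup>2)" by (rule real_sqrt_le_mono)
  then show "\<bar>v j\<bar> \<le> sqrt (\<Sum>j<mk. (v j)\<^sup>2)" by simp
qed

lemma vnorm_le_sum: "vnorm mk v \<le> (\<Sum>j<mk. \<bar>v j\<bar>)"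
  using L2_set_le_sum_abs[of v "{..<mk}"] by (simp add: vnorm_def L2_set_def)

lemma vnorm_triangle: "vnorm mk (\<lambda>j. a j + b j) \<le> vnorm mk a + vnorm mk b"
  using L2_set_triangle_ineq[of a b "{..<mk}"] by (simp add: vnorm_def L2_set_def)

lemma vnorm_zero[simp]: "vnorm mk (\<lambda>j. 0) = 0"
  by (simp add: vnorm_def)

lemma vnorm_commute: "vnorm mk (\<lambda>j. a j - b j) = vnorm mk (\<lambda>j. b j - a j)"
  by (simp add: vnorm_def power2_commute)

lemma Cspace_cont: "u \<in> Cspace t0 t1 mk \<Longrightarrow> continuous_on {t0..t1} (\<lambda>t. u t j)"
  by (simp add: Cspace_def)

lemma zero_Cspace: "(\<lambda>t j. 0) \<in> Cspace t0 t1 mk"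
  by (simp add: Cspace_def is_vec_def)

lemma vnorm_cont:
  assumes "u \<in> Cspace t0 t1 mk" "w \<in> Cspace t0 t1 mk"
  shows "continuous_on {t0..t1} (\<lambda>t. vnorm mk (\<lambda>j. u t j - w t j))"
  unfolding vnorm_def using Cspace_cont[OF assms(1)] Cspace_cont[OF assms(2)]
  by (intro continuous_intros) auto

lemma bdd_vn:
  assumes "u \<in> Cspace t0 t1 mk" "w \<in> Cspace t0 t1 mk"
  shows "bdd_above ((\<lambda>t. vnorm mk (\<lambda>j. u t j - w t j)) ` {t0..t1})"
  by (intro bounded_imp_bdd_above compact_imp_bounded compact_continuous_image vnorm_cont assms) auto

lemma cdist_ge:
  assumes "u \<in> Cspace t0 t1 mk" "w \<in> Cspace t0 t1 mk" "t \<in> {t0..t1}"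
  shows "vnorm mk (\<lambda>j. u t j - w t j) \<le> cdist t0 t1 mk u w"
  unfolding cdist_def cnorm_def using cSUP_upper[OF assms(3) bdd_vn[OF assms(1,2)]] by simp

lemma cdist_le:
  assumes "t0 \<le> t1" "\<And>t. t \<in> {t0..t1} \<Longrightarrow> vnorm mk (\<lambda>j. u t j - w t j) \<le> e"
  shows "cdist t0 t1 mk u w \<le> e"
  unfolding cdist_def cnorm_def using assms by (intro cSUP_least) auto

lemma cdist_nonneg:
  assumes "t0 \<le> t1" "u \<in> Cspace t0 t1 mk" "w \<in> Cspace t0 t1 mk"
  shows "0 \<le> cdist t0 t1 mk u w"
  using order_trans[OF vnorm_nonneg cdist_ge[OF assms(2,3), of t0]] assms(1) by simp

lemma cdist_self[simp]: "t0 \<le> t1 \<Longrightarrow> cdist t0 t1 mk u u = 0"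
  by (simp add: cdist_def cnorm_def)

lemma cdist_commute: "cdist t0 t1 mk u w = cdist t0 t1 mk w u"
  unfolding cdist_def cnorm_def by (subst vnorm_commute) simp

lemma cdist_triangle:
  assumes "t0 \<le> t1" "u \<in> Cspace t0 t1 mk" "v \<in> Cspace t0 t1 mk" "w \<in> Cspace t0 t1 mk"
  shows "cdist t0 t1 mk u w \<le> cdist t0 t1 mk u v + cdist t0 t1 mk v w"
proof (rule cdist_le[OF assms(1)])
  fix t assume t: "t \<in> {t0..t1}"
  have "vnorm mk (\<lambda>j. u t j - w t j) = vnorm mk (\<lambda>j. (u t j - v t j) + (v t j - w t j))" by simp
  also have "\<dots> \<le> vnorm mk (\<lambda>j. u t j - v t j) + vnorm mk (\<lambda>j. v t j - w t j)" by (rule vnorm_triangle)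
  also have "\<dots> \<le> cdist t0 t1 mk u v + cdist t0 t1 mk v w"
    using cdist_ge[OF assms(2,3) t] cdist_ge[OF assms(3,4) t] by simp
  finally show "vnorm mk (\<lambda>j. u t j - w t j) \<le> cdist t0 t1 mk u v + cdist t0 t1 mk v w" .
qed

lemma cdist_zero:
  assumes "t0 \<le> t1" "u \<in> Cspace t0 t1 mk" "w \<in> Cspace t0 t1 mk" "cdist t0 t1 mk u w = 0"
  shows "u = w"
proof (intro ext)
  fix t j
  show "u t j = w t j"
  proof (cases "t \<in> {t0..t1}")
    case True
    show ?thesis
    proof (cases "j < mk")
      case j: True
      have "\<bar>u t j - w t j\<bar> \<le> 0"
        using abs_le_vnorm[OF j, of "\<lambda>j. u t j - w t j"] cdist_ge[OF assms(2,3) True] assms(4) by simp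
      then show ?thesis by simp
    next
      case False
      then show ?thesis using assms(2,3) True by (simp add: Cspace_def is_vec_def)
    qed
  next
    case False
    then show ?thesis using assms(2,3) by (simp add: Cspace_def)
  qed
qed

lemma abs_le_cdist:
  assumes "u \<in> Cspace t0 t1 mk" "w \<in> Cspace t0 t1 mk" "t \<in> {t0..t1}" "j < mk"
  shows "\<bar>u t j - w t j\<bar> \<le> cdist t0 t1 mk u w"
  using abs_le_vnorm[OF assms(4), of "\<lambda>j. u t j - w t j"] cdist_ge[OF assms(1-3)] by simp

lemma cdist_le_sum:
  assumes "t0 \<le> t1" "\<And>t j. t \<in> {t0..t1} \<Longrightarrow> j < mk \<Longrightarrow> \<bar>u t j - w t j\<bar> \<le> e"
  shows "cdist t0 t1 mk u w \<le> real mk * e"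
proof (rule cdist_le[OF assms(1)])
  fix t assume t: "t \<in> {t0..t1}"
  have "vnorm mk (\<lambda>j. u t j - w t j) \<le> (\<Sum>j<mk. \<bar>u t j - w t j\<bar>)" by (rule vnorm_le_sum)
  also have "\<dots> \<le> (\<Sum>j<mk. e)" using assms(2)[OF t] by (intro sum_mono) auto
  finally show "vnorm mk (\<lambda>j. u t j - w t j) \<le> real mk * e" by simp
qed

section \<open>Profiles\<close>

lemma prof_C: "u \<in> profiles n U \<Longrightarrow> \<forall>k\<in>{1..n}. U k \<subseteq> Cspace t0 t1 (m k) \<Longrightarrow> k \<in> {1..n} \<Longrightarrow> u k \<in> Cspace t0 t1 (m k)"
  unfolding profiles_def by blast

lemma pdist_nonneg:
  assumes "t0 \<le> t1" "\<forall>k\<in>{1..n}. U k \<subseteq> Cspace t0 t1 (m k)" "u \<in> profiles n U" "w \<in> profiles n U"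
  shows "0 \<le> pdist t0 t1 n m u w"
  unfolding pdist_def by (intro sum_nonneg cdist_nonneg assms(1) prof_C[OF _ assms(2)] assms(3,4))

lemma pdist_commute: "pdist t0 t1 n m u w = pdist t0 t1 n m w u"
  unfolding pdist_def by (subst cdist_commute) simp

lemma pdist_self: "t0 \<le> t1 \<Longrightarrow> pdist t0 t1 n m u u = 0"
  unfolding pdist_def by simp

lemma pdist_triangle:
  assumes "t0 \<le> t1" "\<forall>k\<in>{1..n}. U k \<subseteq> Cspace t0 t1 (m k)" "u \<in> profiles n U" "v \<in> profiles n U" "w \<in> profiles n U"
  shows "pdist t0 t1 n m u w \<le> pdist t0 t1 n m u v + pdist t0 t1 n m v w"
  unfolding pdist_def sum.distrib[symmetric]
  by (intro sum_mono cdist_triangle assms(1) prof_C[OF _ assms(2)] assms(3-5))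

lemma pdist_zero:
  assumes "t0 \<le> t1" "\<forall>k\<in>{1..n}. U k \<subseteq> Cspace t0 t1 (m k)" "u \<in> profiles n U" "w \<in> profiles n U"
    "pdist t0 t1 n m u w = 0"
  shows "u = w"
proof (rule ext)
  fix k
  show "u k = w k"
  proof (cases "k \<in> {1..n}")
    case True
    have nn: "\<forall>k\<in>{1..n}. 0 \<le> cdist t0 t1 (m k) (u k) (w k)"
      by (intro ballI cdist_nonneg assms(1) prof_C[OF _ assms(2)] assms(3,4))
    have "\<forall>k\<in>{1..n}. cdist t0 t1 (m k) (u k) (w k) = 0"
      using assms(5) nn unfolding pdist_def by (subst (asm) sum_nonneg_eq_0_iff) auto
    then show ?thesis using True
      by (intro cdist_zero[of t0 t1 "u k" "m k" "w k"] assms(1) prof_C[OF _ assms(2)] assms(3,4)) auto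
  next
    case False
    then show ?thesis using assms(3,4) by (simp add: profiles_def)
  qed
qed

lemma upd_profiles: "u \<in> profiles n U \<Longrightarrow> i \<in> {1..n} \<Longrightarrow> v \<in> U i \<Longrightarrow> u(i := v) \<in> profiles n U"
  by (auto simp: profiles_def)

lemma pdist_upd:
  assumes "t0 \<le> t1" "\<forall>k\<in>{1..n}. U k \<subseteq> Cspace t0 t1 (m k)" "u \<in> profiles n U" "u' \<in> profiles n U"
    "i \<in> {1..n}"
  shows "pdist t0 t1 n m (u'(i := v)) (u(i := v)) \<le> pdist t0 t1 n m u' u"
  unfolding pdist_def
proof (intro sum_mono)
  fix k assume k: "k \<in> {1..n}"
  show "cdist t0 t1 (m k) ((u'(i := v)) k) ((u(i := v)) k) \<le> cdist t0 t1 (m k) (u' k) (u k)"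
  proof (cases "k = i")
    case True
    then show ?thesis using cdist_nonneg[OF assms(1) prof_C[OF assms(4,2) k] prof_C[OF assms(3,2) k]] assms(1) by simp
  qed simp
qed

definition pmetric where
  "pmetric t0 t1 n m U = (\<lambda>u w. if u \<in> profiles n U \<and> w \<in> profiles n U then pdist t0 t1 n m u w else 0)"

lemma metric_profiles:
  assumes "t0 \<le> t1" "\<forall>k\<in>{1..n}. U k \<subseteq> Cspace t0 t1 (m k)"
  shows "Metric_space (profiles n U) (pmetric t0 t1 n m U)"
proof
  show "\<And>x y. 0 \<le> pmetric t0 t1 n m U x y"
    unfolding pmetric_def using pdist_nonneg[OF assms] by auto
  show "\<And>x y. pmetric t0 t1 n m U x y = pmetric t0 t1 n m U y x"
    unfolding pmetric_def using pdist_commute by metis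
  show "\<And>x y. x \<in> profiles n U \<Longrightarrow> y \<in> profiles n U \<Longrightarrow> (pmetric t0 t1 n m U x y = 0) = (x = y)"
    unfolding pmetric_def using pdist_zero[OF assms] pdist_self[OF assms(1)] by auto
  show "\<And>x y z. x \<in> profiles n U \<Longrightarrow> y \<in> profiles n U \<Longrightarrow> z \<in> profiles n U \<Longrightarrow>
      pmetric t0 t1 n m U x z \<le> pmetric t0 t1 n m U x y + pmetric t0 t1 n m U y z"
    unfolding pmetric_def using pdist_triangle[OF assms] by auto
qed

lemma tendsto0_crit:
  fixes X :: "nat \<Rightarrow> real"
  assumes "\<And>e. e > 0 \<Longrightarrow> \<exists>N. \<forall>p\<ge>N. X p \<le> e" "\<And>p. 0 \<le> X p"
  shows "X \<longlonglongrightarrow> 0"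
  unfolding LIMSEQ_iff
proof (intro allI impI)
  fix r :: real assume r: "r > 0"
  obtain N where "\<forall>p\<ge>N. X p \<le> r / 2" using assms(1)[of "r/2"] r by auto
  then show "\<exists>no. \<forall>n\<ge>no. norm (X n - 0) < r" using assms(2) r by (intro exI[of _ N]) force
qed

lemma ctrl_bound:
  assumes adm: "admissible_ctrl t0 t1 mk Mk U" and u: "u \<in> U" and t: "t \<in> {t0..t1}"
  shows "\<bar>u t j\<bar> \<le> Mk"
proof -
  have uC: "u \<in> Cspace t0 t1 mk" using adm u by (auto simp: admissible_ctrl_def)
  have cn: "cnorm t0 t1 mk u \<le> Mk" using adm u by (auto simp: admissible_ctrl_def)
  have cd: "cdist t0 t1 mk u (\<lambda>t j. 0) = cnorm t0 t1 mk u" by (simp add: cdist_def)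
  have vn: "vnorm mk (u t) \<le> Mk"
    using cdist_ge[OF uC zero_Cspace t] cd cn by simp
  show ?thesis
  proof (cases "j < mk")
    case True
    then show ?thesis using abs_le_vnorm[OF True, of "u t"] vn by simp
  next
    case False
    then have "u t j = 0" using uC t by (auto simp: Cspace_def is_vec_def)
    then show ?thesis using vn vnorm_nonneg[of mk "u t"] by simp
  qed
qed

lemma ctrl_equicont:
  assumes adm: "admissible_ctrl t0 t1 mk Mk U" and e: "e > 0"
  shows "\<exists>\<delta>>0. \<forall>u\<in>U. \<forall>s\<in>{t0..t1}. \<forall>t\<in>{t0..t1}. \<bar>s - t\<bar> < \<delta> \<longrightarrow> \<bar>u s j - u t j\<bar> < e"
proof -
  obtain \<delta> where d: "\<delta> > 0" "\<forall>u\<in>U. \<forall>s\<in>{t0..t1}. \<forall>t\<in>{t0..t1}. \<bar>s - t\<bar> < \<delta> \<longrightarrow> vnorm mk (\<lambda>j. u s j - u t j) < e"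
    using adm e unfolding admissible_ctrl_def equicont_ctrl_def by blast
  show ?thesis
  proof (intro exI conjI ballI impI)
    fix u s t assume u: "u \<in> U" and s: "s \<in> {t0..t1}" and t: "t \<in> {t0..t1}" and st: "\<bar>s - t\<bar> < \<delta>"
    have uC: "u \<in> Cspace t0 t1 mk" using adm u by (auto simp: admissible_ctrl_def)
    show "\<bar>u s j - u t j\<bar> < e"
    proof (cases "j < mk")
      case True
      then show ?thesis using abs_le_vnorm[OF True, of "\<lambda>j. u s j - u t j"] d u s t st by force
    next
      case False
      then show ?thesis using uC s t e by (auto simp: Cspace_def is_vec_def)
    qed
  qed (use d in auto)
qed

lemma profiles_seq_compact:
  fixes \<sigma> :: "nat \<Rightarrow> nat \<Rightarrow> real \<Rightarrow> nat \<Rightarrow> real"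
  assumes t: "t0 < t1" and adm: "\<forall>k\<in>{1..n}. admissible_ctrl t0 t1 (m k) (M k) (U k)"
    and sig: "\<And>p. \<sigma> p \<in> profiles n U"
  shows "\<exists>l r. l \<in> profiles n U \<and> strict_mono r \<and> (\<lambda>p. pdist t0 t1 n m (\<sigma> (r p)) l) \<longlonglongrightarrow> 0"
proof -
  define S where "S = {t0..t1}"
  have UC: "\<forall>k\<in>{1..n}. U k \<subseteq> Cspace t0 t1 (m k)" using adm by (auto simp: admissible_ctrl_def)
  have sk: "\<sigma> p k \<in> U k" if "k \<in> {1..n}" for p k using sig[of p] that by (auto simp: profiles_def)
  define I where "I = Sigma {1..n} (\<lambda>k. {..<m k})"
  have finI: "finite I" unfolding I_def by auto
  define Pr where "Pr = (\<lambda>(a::nat\<times>nat) (r::nat\<Rightarrow>nat). \<exists>g. continuous_on S g \<and>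
       (\<forall>e>0. \<exists>N. \<forall>p\<ge>N. \<forall>t\<in>S. \<bar>\<sigma> (r p) (fst a) t (snd a) - g t\<bar> < e))"
  have "\<exists>r. strict_mono r \<and> (\<forall>a\<in>I. Pr a r)"
  proof (rule common_subseq[OF finI])
    fix a r assume a: "a \<in> I" and r: "strict_mono (r::nat\<Rightarrow>nat)"
    obtain k j where kj: "a = (k, j)" "k \<in> {1..n}" using a unfolding I_def by auto
    have bd: "norm (\<sigma> (r p) k t j) \<le> M k" if "t \<in> S" for p t
      using ctrl_bound[of t0 t1 "m k" "M k" "U k" "\<sigma> (r p) k" t j] adm kj(2) sk[OF kj(2)] that
      unfolding S_def by auto
    have eq: "\<exists>d. 0 < d \<and> (\<forall>p y. y \<in> S \<and> norm (x - y) < d \<longrightarrow> norm (\<sigma> (r p) k x j - \<sigma> (r p) k y j) < e)"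
      if xe: "x \<in> S" "0 < e" for x e
    proof -
      obtain \<delta> where d: "\<delta> > 0" "\<forall>u\<in>U k. \<forall>s\<in>{t0..t1}. \<forall>t\<in>{t0..t1}. \<bar>s - t\<bar> < \<delta> \<longrightarrow> \<bar>u s j - u t j\<bar> < e"
        using ctrl_equicont[of t0 t1 "m k" "M k" "U k" e j] adm kj(2) xe(2) by auto
      show ?thesis using d xe sk[OF kj(2)] unfolding S_def by (intro exI[of _ \<delta>]) auto
    qed
    obtain g kk where g: "continuous_on S g" "strict_mono (kk :: nat \<Rightarrow> nat)"
      "\<And>e. 0 < e \<Longrightarrow> \<exists>N. \<forall>p x. p \<ge> N \<and> x \<in> S \<longrightarrow> norm (\<sigma> (r (kk p)) k x j - g x) < e"
      using Arzela_Ascoli[of S "\<lambda>p t. \<sigma> (r p) k t j" "M k"] bd eq unfolding S_def by auto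
    have "\<forall>e>0. \<exists>N. \<forall>p\<ge>N. \<forall>t\<in>S. \<bar>\<sigma> (r (kk p)) k t j - g t\<bar> < e"
    proof (intro allI impI)
      fix e :: real assume "e > 0"
      then obtain N where "\<forall>p x. p \<ge> N \<and> x \<in> S \<longrightarrow> norm (\<sigma> (r (kk p)) k x j - g x) < e" using g(3) by blast
      then show "\<exists>N. \<forall>p\<ge>N. \<forall>t\<in>S. \<bar>\<sigma> (r (kk p)) k t j - g t\<bar> < e" by auto
    qed
    then have "Pr a (r \<circ> kk)" unfolding Pr_def kj(1) using g(1) by auto
    then show "\<exists>kk::nat\<Rightarrow>nat. strict_mono kk \<and> Pr a (r \<circ> kk)" using g(2) by blast
  next
    fix a r kk assume pr: "Pr a r" and kk: "strict_mono (kk::nat\<Rightarrow>nat)"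
    from pr obtain g where g: "continuous_on S g" "\<forall>e>0. \<exists>N. \<forall>p\<ge>N. \<forall>t\<in>S. \<bar>\<sigma> (r p) (fst a) t (snd a) - g t\<bar> < e"
      unfolding Pr_def by blast
    have "\<forall>e>0. \<exists>N. \<forall>p\<ge>N. \<forall>t\<in>S. \<bar>\<sigma> ((r \<circ> kk) p) (fst a) t (snd a) - g t\<bar> < e"
    proof (intro allI impI)
      fix e :: real assume "e > 0"
      then obtain N where N: "\<forall>p\<ge>N. \<forall>t\<in>S. \<bar>\<sigma> (r p) (fst a) t (snd a) - g t\<bar> < e" using g(2) by blast
      show "\<exists>N. \<forall>p\<ge>N. \<forall>t\<in>S. \<bar>\<sigma> ((r \<circ> kk) p) (fst a) t (snd a) - g t\<bar> < e"
        using N seq_suble[OF kk] by (intro exI[of _ N]) (auto intro: order_trans)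
    qed
    then show "Pr a (r \<circ> kk)" unfolding Pr_def using g(1) by blast
  qed
  then obtain r where r: "strict_mono r" "\<forall>a\<in>I. Pr a r" by blast
  obtain G where G: "\<forall>a\<in>I. continuous_on S (G a) \<and>
       (\<forall>e>0. \<exists>N. \<forall>p\<ge>N. \<forall>t\<in>S. \<bar>\<sigma> (r p) (fst a) t (snd a) - G a t\<bar> < e)"
    using bchoice[OF r(2)[unfolded Pr_def]] by auto
  define l where "l = (\<lambda>k t j. if k \<in> {1..n} \<and> j < m k \<and> t \<in> S then G (k, j) t else 0)"
  have conv: "\<exists>N. \<forall>p\<ge>N. \<forall>t\<in>S. \<forall>j<m k. \<bar>\<sigma> (r p) k t j - l k t j\<bar> < e"
    if k: "k \<in> {1..n}" and e: "e > 0" for k e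
  proof -
    have "\<forall>j\<in>{..<m k}. eventually (\<lambda>p. \<forall>t\<in>S. \<bar>\<sigma> (r p) k t j - G (k, j) t\<bar> < e) sequentially"
      using G k e unfolding I_def eventually_sequentially by force
    then have "eventually (\<lambda>p. \<forall>j\<in>{..<m k}. \<forall>t\<in>S. \<bar>\<sigma> (r p) k t j - G (k, j) t\<bar> < e) sequentially"
      by (rule eventually_ball_finite[rotated]) simp
    then show ?thesis unfolding eventually_sequentially l_def using k by auto
  qed
  have lC: "l k \<in> Cspace t0 t1 (m k)" if k: "k \<in> {1..n}" for k
    unfolding Cspace_def
  proof (intro CollectI conjI allI ballI impI)
    fix t assume "t \<in> {t0..t1}"
    show "is_vec (m k) (l k t)" by (simp add: is_vec_def l_def)
  next
    fix j
    show "continuous_on {t0..t1} (\<lambda>t. l k t j)"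
    proof (cases "j < m k")
      case True
      have "continuous_on S (G (k, j))" using G True k unfolding I_def by auto
      then show ?thesis using True k unfolding S_def l_def
        by (elim continuous_on_eq) auto
    next
      case False
      then show ?thesis by (simp add: l_def)
    qed
  next
    fix t assume "t \<notin> {t0..t1}"
    then show "l k t = (\<lambda>j. 0)" by (auto simp: l_def S_def)
  qed
  have cd0: "(\<lambda>p. cdist t0 t1 (m k) (\<sigma> (r p) k) (l k)) \<longlonglongrightarrow> 0" if k: "k \<in> {1..n}" for k
  proof (rule tendsto0_crit)
    fix e :: real assume e: "e > 0"
    obtain N where N: "\<forall>p\<ge>N. \<forall>t\<in>S. \<forall>j<m k. \<bar>\<sigma> (r p) k t j - l k t j\<bar> < e / (real (m k) + 1)"
      using conv[OF k, of "e / (real (m k) + 1)"] e by auto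
    have "cdist t0 t1 (m k) (\<sigma> (r p) k) (l k) \<le> e" if "p \<ge> N" for p
    proof -
      have "cdist t0 t1 (m k) (\<sigma> (r p) k) (l k) \<le> real (m k) * (e / (real (m k) + 1))"
        using N that t unfolding S_def by (intro cdist_le_sum) (auto intro: less_imp_le)
      also have "\<dots> \<le> e" using e by (simp add: field_simps)
      finally show ?thesis .
    qed
    then show "\<exists>N. \<forall>p\<ge>N. cdist t0 t1 (m k) (\<sigma> (r p) k) (l k) \<le> e" by blast
  next
    fix p show "0 \<le> cdist t0 t1 (m k) (\<sigma> (r p) k) (l k)"
      using cdist_nonneg[of t0 t1 "\<sigma> (r p) k" "m k" "l k"] t lC[OF k] prof_C[OF sig UC k] by auto
  qed
  have lU: "l k \<in> U k" if k: "k \<in> {1..n}" for k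
  proof -
    have cl: "closed_ctrl t0 t1 (m k) (U k)" using adm k by (simp add: admissible_ctrl_def)
    have "(\<forall>p. \<sigma> (r p) k \<in> U k) \<and> l k \<in> Cspace t0 t1 (m k) \<and>
          (\<lambda>p. cdist t0 t1 (m k) (\<sigma> (r p) k) (l k)) \<longlonglongrightarrow> 0"
      using lC[OF k] cd0[OF k] sk[OF k] by blast
    then show ?thesis using cl[unfolded closed_ctrl_def, rule_format, of "\<lambda>p. \<sigma> (r p) k" "l k"] by simp
  qed
  have lP: "l \<in> profiles n U"
    unfolding profiles_def using lU by (auto simp: l_def)
  have "(\<lambda>p. pdist t0 t1 n m (\<sigma> (r p)) l) \<longlonglongrightarrow> 0"
    unfolding pdist_def by (rule tendsto_null_sum) (rule cd0)
  then show ?thesis using lP r(1) by blast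
qed

definition scont :: "('a \<Rightarrow> 'a \<Rightarrow> real) \<Rightarrow> 'a set \<Rightarrow> ('a \<Rightarrow> real) \<Rightarrow> bool" where
  "scont dst S \<phi> \<longleftrightarrow> (\<forall>x\<in>S. \<forall>e>0. \<exists>\<delta>>0. \<forall>x'\<in>S. dst x' x < \<delta> \<longrightarrow> \<bar>\<phi> x' - \<phi> x\<bar> < e)"

lemma scont_lower: "ivl_continuous_on dst S F \<Longrightarrow> scont dst S (\<lambda>x. lower (F x))"
  unfolding scont_def
proof (intro ballI allI impI)
  fix x e assume "ivl_continuous_on dst S F" "x \<in> S" "(e::real) > 0"
  from ivl_cont_lu[OF this] obtain \<delta> where "\<delta> > 0"
    "\<forall>x'\<in>S. dst x' x < \<delta> \<longrightarrow> \<bar>lower (F x') - lower (F x)\<bar> < e \<and> \<bar>upper (F x') - upper (F x)\<bar> < e"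
    by blast
  then show "\<exists>\<delta>>0. \<forall>x'\<in>S. dst x' x < \<delta> \<longrightarrow> \<bar>lower (F x') - lower (F x)\<bar> < e"
    by (intro exI[of _ \<delta>]) simp
qed

lemma scont_upper: "ivl_continuous_on dst S F \<Longrightarrow> scont dst S (\<lambda>x. upper (F x))"
  unfolding scont_def
proof (intro ballI allI impI)
  fix x e assume "ivl_continuous_on dst S F" "x \<in> S" "(e::real) > 0"
  from ivl_cont_lu[OF this] obtain \<delta> where "\<delta> > 0"
    "\<forall>x'\<in>S. dst x' x < \<delta> \<longrightarrow> \<bar>lower (F x') - lower (F x)\<bar> < e \<and> \<bar>upper (F x') - upper (F x)\<bar> < e"
    by blast
  then show "\<exists>\<delta>>0. \<forall>x'\<in>S. dst x' x < \<delta> \<longrightarrow> \<bar>upper (F x') - upper (F x)\<bar> < e"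
    by (intro exI[of _ \<delta>]) simp
qed

lemma scont_diff:
  assumes "scont dst S a" "scont dst S b"
  shows "scont dst S (\<lambda>x. a x - b x)"
  unfolding scont_def
proof (intro ballI allI impI)
  fix x e assume x: "x \<in> S" and e: "(e::real) > 0"
  obtain d1 where d1: "d1 > 0" "\<forall>x'\<in>S. dst x' x < d1 \<longrightarrow> \<bar>a x' - a x\<bar> < e/2"
    using assms(1) x e unfolding scont_def by (meson half_gt_zero)
  obtain d2 where d2: "d2 > 0" "\<forall>x'\<in>S. dst x' x < d2 \<longrightarrow> \<bar>b x' - b x\<bar> < e/2"
    using assms(2) x e unfolding scont_def by (meson half_gt_zero)
  show "\<exists>\<delta>>0. \<forall>x'\<in>S. dst x' x < \<delta> \<longrightarrow> \<bar>a x' - b x' - (a x - b x)\<bar> < e"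
  proof (intro exI[of _ "min d1 d2"] conjI ballI impI)
    fix x' assume "x' \<in> S" "dst x' x < min d1 d2"
    then have "\<bar>a x' - a x\<bar> < e/2" "\<bar>b x' - b x\<bar> < e/2" using d1 d2 by auto
    then show "\<bar>a x' - b x' - (a x - b x)\<bar> < e" by linarith
  qed (use d1 d2 in auto)
qed

lemma scont_min:
  assumes "scont dst S a" "scont dst S b"
  shows "scont dst S (\<lambda>x. min (a x) (b x))"
  unfolding scont_def
proof (intro ballI allI impI)
  fix x e assume x: "x \<in> S" and e: "(e::real) > 0"
  obtain d1 where d1: "d1 > 0" "\<forall>x'\<in>S. dst x' x < d1 \<longrightarrow> \<bar>a x' - a x\<bar> < e"
    using assms(1) x e unfolding scont_def by meson
  obtain d2 where d2: "d2 > 0" "\<forall>x'\<in>S. dst x' x < d2 \<longrightarrow> \<bar>b x' - b x\<bar> < e"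
    using assms(2) x e unfolding scont_def by meson
  show "\<exists>\<delta>>0. \<forall>x'\<in>S. dst x' x < \<delta> \<longrightarrow> \<bar>min (a x') (b x') - min (a x) (b x)\<bar> < e"
  proof (intro exI[of _ "min d1 d2"] conjI ballI impI)
    fix x' assume "x' \<in> S" "dst x' x < min d1 d2"
    then have "\<bar>a x' - a x\<bar> < e" "\<bar>b x' - b x\<bar> < e" using d1 d2 by auto
    then show "\<bar>min (a x') (b x') - min (a x) (b x)\<bar> < e" by (simp add: min_def abs_less_iff)
  qed (use d1 d2 in auto)
qed

lemma scont_seq:
  assumes "scont dst S \<phi>" "x \<in> S" "\<And>p. y p \<in> S" "(\<lambda>p. dst (y p) x) \<longlonglongrightarrow> 0"
  shows "(\<lambda>p. \<phi> (y p)) \<longlonglongrightarrow> \<phi> x"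
  unfolding LIMSEQ_iff
proof (intro allI impI)
  fix r :: real assume r: "r > 0"
  obtain \<delta> where d: "\<delta> > 0" "\<forall>x'\<in>S. dst x' x < \<delta> \<longrightarrow> \<bar>\<phi> x' - \<phi> x\<bar> < r"
    using assms(1,2) r unfolding scont_def by blast
  obtain N where N: "\<forall>p\<ge>N. norm (dst (y p) x - 0) < \<delta>" using assms(4) d(1) unfolding LIMSEQ_iff by blast
  show "\<exists>no. \<forall>p\<ge>no. norm (\<phi> (y p) - \<phi> x) < r"
    using N d(2) assms(3) by (intro exI[of _ N]) auto
qed

lemma comb_diff_bound:
  fixes b B :: real
  assumes "finite I" "\<bar>b\<bar> \<le> B" "\<And>l. l \<in> I \<Longrightarrow> \<bar>X l\<bar> \<le> B"
  shows "\<bar>((1 - sum y I) * b + (\<Sum>l\<in>I. y l * X l)) - ((1 - sum x I) * b + (\<Sum>l\<in>I. x l * X l))\<bar>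
         \<le> 2 * B * (\<Sum>l\<in>I. \<bar>y l - x l\<bar>)"
proof -
  have eq: "((1 - sum y I) * b + (\<Sum>l\<in>I. y l * X l)) - ((1 - sum x I) * b + (\<Sum>l\<in>I. x l * X l))
      = (\<Sum>l\<in>I. x l - y l) * b + (\<Sum>l\<in>I. (y l - x l) * X l)"
    by (simp add: sum_subtractf algebra_simps)
  have B0: "0 \<le> B" using assms(2) by simp
  have "\<bar>(\<Sum>l\<in>I. x l - y l) * b\<bar> \<le> (\<Sum>l\<in>I. \<bar>y l - x l\<bar>) * B"
  proof -
    have "\<bar>(\<Sum>l\<in>I. x l - y l)\<bar> \<le> (\<Sum>l\<in>I. \<bar>x l - y l\<bar>)" by (rule sum_abs)
    also have "\<dots> = (\<Sum>l\<in>I. \<bar>y l - x l\<bar>)" by (simp add: abs_minus_commute)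
    finally show ?thesis unfolding abs_mult using assms(2) by (intro mult_mono) auto
  qed
  moreover have "\<bar>\<Sum>l\<in>I. (y l - x l) * X l\<bar> \<le> (\<Sum>l\<in>I. \<bar>y l - x l\<bar>) * B"
  proof -
    have "\<bar>\<Sum>l\<in>I. (y l - x l) * X l\<bar> \<le> (\<Sum>l\<in>I. \<bar>(y l - x l) * X l\<bar>)" by (rule sum_abs)
    also have "\<dots> \<le> (\<Sum>l\<in>I. \<bar>y l - x l\<bar> * B)"
      unfolding abs_mult using assms(3) by (intro sum_mono mult_left_mono) auto
    finally show ?thesis by (simp add: sum_distrib_right)
  qed
  moreover have "2 * B * (\<Sum>l\<in>I. \<bar>y l - x l\<bar>) = (\<Sum>l\<in>I. \<bar>y l - x l\<bar>) * B + (\<Sum>l\<in>I. \<bar>y l - x l\<bar>) * B"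
    by simp
  ultimately show ?thesis unfolding eq
    using abs_triangle_ineq[of "(\<Sum>l\<in>I. x l - y l) * b" "\<Sum>l\<in>I. (y l - x l) * X l"] by linarith
qed

theorem theorem3p2:
  fixes n :: nat and t0 t1 :: real and x0 :: "real^'m"
    and m :: "nat \<Rightarrow> nat" and M :: "nat \<Rightarrow> real"
    and U :: "nat \<Rightarrow> (real \<Rightarrow> nat \<Rightarrow> real) set"
    and f :: "real \<Rightarrow> real^'m \<Rightarrow> (nat \<Rightarrow> nat \<Rightarrow> real) \<Rightarrow> real^'m"
    and d :: "nat \<Rightarrow> nat"
    and psi :: "nat \<Rightarrow> real^'m \<Rightarrow> nat \<Rightarrow> real interval"
    and L :: "nat \<Rightarrow> real \<Rightarrow> real^'m \<Rightarrow> (nat \<Rightarrow> nat \<Rightarrow> real) \<Rightarrow> nat \<Rightarrow> real interval"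
  assumes "n \<ge> 1" and "0 \<le> t0" and "t0 < t1"
    and "\<forall>k\<in>{1..n}. M k > 0 \<and> admissible_ctrl t0 t1 (m k) (M k) (U k) \<and> convex_ctrl (U k)"
    and "classY t0 t1 n m M f"
    and "\<forall>i\<in>{1..n}. \<exists>ki\<in>{1..d i}.
           ivl_continuous_on (pdist t0 t1 n m) (profiles n U)
              (\<lambda>u. payoff t0 t1 x0 f (psi i) (L i) u ki)
         \<and> (\<forall>u\<in>profiles n U. gen_quasi_concave ctrl_comb (U i)
              (\<lambda>v. payoff t0 t1 x0 f (psi i) (L i) (u(i := v)) ki))"
  shows "\<exists>ustar\<in>profiles n U. \<forall>i\<in>{1..n}. \<forall>v\<in>U i.
           \<not> ivl_prec (d i) (payoff t0 t1 x0 f (psi i) (L i) ustar)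
                           (payoff t0 t1 x0 f (psi i) (L i) (ustar(i := v)))"
proof (rule ccontr)
  assume neg: "\<not> ?thesis"
  note t01 = \<open>t0 < t1\<close>
  have t: "t0 \<le> t1" using t01 by simp
  define P where "P = profiles n U"
  define S where "S = {t0..t1}"
  have adm: "\<forall>k\<in>{1..n}. admissible_ctrl t0 t1 (m k) (M k) (U k)" using assms(4) by blast
  have Mpos: "\<And>k. k \<in> {1..n} \<Longrightarrow> M k > 0" using assms(4) by blast
  have cvx: "\<And>k. k \<in> {1..n} \<Longrightarrow> convex_ctrl (U k)" using assms(4) by blast
  have UC: "\<forall>k\<in>{1..n}. U k \<subseteq> Cspace t0 t1 (m k)" using adm by (auto simp: admissible_ctrl_def)
  have Une: "\<And>k. k \<in> {1..n} \<Longrightarrow> U k \<noteq> {}" using adm by (auto simp: admissible_ctrl_def)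
  obtain kk where kk: "\<forall>i\<in>{1..n}. kk i \<in> {1..d i} \<and>
           ivl_continuous_on (pdist t0 t1 n m) (profiles n U)
              (\<lambda>u. payoff t0 t1 x0 f (psi i) (L i) u (kk i))
         \<and> (\<forall>u\<in>profiles n U. gen_quasi_concave ctrl_comb (U i)
              (\<lambda>v. payoff t0 t1 x0 f (psi i) (L i) (u(i := v)) (kk i)))"
  proof -
    have "\<forall>i\<in>{1..n}. \<exists>ki. ki \<in> {1..d i} \<and>
           ivl_continuous_on (pdist t0 t1 n m) (profiles n U)
              (\<lambda>u. payoff t0 t1 x0 f (psi i) (L i) u ki)
         \<and> (\<forall>u\<in>profiles n U. gen_quasi_concave ctrl_comb (U i)
              (\<lambda>v. payoff t0 t1 x0 f (psi i) (L i) (u(i := v)) ki))"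
      using assms(6) unfolding Bex_def .
    from bchoice[OF this] show ?thesis using that by blast
  qed
  define Fi where "Fi = (\<lambda>i u. payoff t0 t1 x0 f (psi i) (L i) u (kk i))"
  define lo where "lo = (\<lambda>i u. lower (Fi i u))"
  define up where "up = (\<lambda>i u. upper (Fi i u))"
  define hh where "hh = (\<lambda>(a :: nat \<times> (real \<Rightarrow> nat \<Rightarrow> real)) u.
      min (lo (fst a) (u(fst a := snd a)) - lo (fst a) u) (up (fst a) (u(fst a := snd a)) - up (fst a) u))"
  define A where "A = {a. fst a \<in> {1..n} \<and> snd a \<in> U (fst a)}"
  have sc_lo: "scont (pdist t0 t1 n m) P (lo i)" if "i \<in> {1..n}" for i
    unfolding lo_def Fi_def P_def using kk that by (intro scont_lower) blast
  have sc_up: "scont (pdist t0 t1 n m) P (up i)" if "i \<in> {1..n}" for i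
    unfolding up_def Fi_def P_def using kk that by (intro scont_upper) blast
  have sc_upd: "scont (pdist t0 t1 n m) P (\<lambda>u. \<phi> (u(i := v)))"
    if sc: "scont (pdist t0 t1 n m) P \<phi>" and i: "i \<in> {1..n}" and v: "v \<in> U i" for \<phi> i v
    unfolding scont_def
  proof (intro ballI allI impI)
    fix u e assume u: "u \<in> P" and e: "(e::real) > 0"
    have uv: "u(i := v) \<in> P" using upd_profiles u i v unfolding P_def by blast
    obtain \<delta> where dl: "\<delta> > 0" "\<forall>x'\<in>P. pdist t0 t1 n m x' (u(i := v)) < \<delta> \<longrightarrow> \<bar>\<phi> x' - \<phi> (u(i := v))\<bar> < e"
      using sc uv e unfolding scont_def by blast
    show "\<exists>\<delta>>0. \<forall>x'\<in>P. pdist t0 t1 n m x' u < \<delta> \<longrightarrow> \<bar>\<phi> (x'(i := v)) - \<phi> (u(i := v))\<bar> < e"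
    proof (intro exI[of _ \<delta>] conjI ballI impI)
      fix x' assume x': "x' \<in> P" "pdist t0 t1 n m x' u < \<delta>"
      have "pdist t0 t1 n m (x'(i := v)) (u(i := v)) \<le> pdist t0 t1 n m x' u"
        using pdist_upd[OF t UC] u x' i unfolding P_def by blast
      moreover have "x'(i := v) \<in> P" using upd_profiles x' i v unfolding P_def by blast
      ultimately show "\<bar>\<phi> (x'(i := v)) - \<phi> (u(i := v))\<bar> < e" using dl x' by force
    qed (use dl in auto)
  qed
  have sc_hh: "scont (pdist t0 t1 n m) P (hh a)" if "a \<in> A" for a
  proof -
    have a: "fst a \<in> {1..n}" "snd a \<in> U (fst a)" using that unfolding A_def by auto
    show ?thesis unfolding hh_def
      by (intro scont_min scont_diff sc_upd sc_lo sc_up a)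
  qed
  interpret Mp: Metric_space P "pmetric t0 t1 n m U"
    unfolding P_def by (rule metric_profiles[OF t UC])
  have dP: "pmetric t0 t1 n m U u w = pdist t0 t1 n m u w" if "u \<in> P" "w \<in> P" for u w
    using that unfolding pmetric_def P_def by simp
  have pnn: "0 \<le> pdist t0 t1 n m u w" if "u \<in> P" "w \<in> P" for u w
    using pdist_nonneg[OF t UC] that unfolding P_def by blast
  have comp: "compactin Mp.mtopology P"
    unfolding Mp.compactin_sequentially
  proof (intro conjI allI impI subset_refl)
    fix \<sigma> :: "nat \<Rightarrow> nat \<Rightarrow> real \<Rightarrow> nat \<Rightarrow> real" assume "range \<sigma> \<subseteq> P"
    then have sig: "\<And>p. \<sigma> p \<in> profiles n U" unfolding P_def by auto
    have ex: "\<exists>l r. l \<in> profiles n U \<and> strict_mono r \<and> (\<lambda>p. pdist t0 t1 n m (\<sigma> (r p)) l) \<longlonglongrightarrow> 0"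
      by (rule profiles_seq_compact[OF t01 adm sig])
    then obtain l and r :: "nat \<Rightarrow> nat" where lr: "l \<in> profiles n U" "strict_mono r" "(\<lambda>p. pdist t0 t1 n m (\<sigma> (r p)) l) \<longlonglongrightarrow> 0"
      by (elim exE conjE)
    have "limitin Mp.mtopology (\<sigma> \<circ> r) l sequentially"
      unfolding Mp.limitin_metric
    proof (intro conjI allI impI)
      show "l \<in> P" using lr(1) unfolding P_def .
      fix \<epsilon> :: real assume "\<epsilon> > 0"
      then have "\<forall>\<^sub>F p in sequentially. pdist t0 t1 n m (\<sigma> (r p)) l < \<epsilon>"
        using order_tendstoD(2)[OF lr(3)] by blast
      then show "\<forall>\<^sub>F p in sequentially. (\<sigma> \<circ> r) p \<in> P \<and> pmetric t0 t1 n m U ((\<sigma> \<circ> r) p) l < \<epsilon>"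
        by (rule eventually_mono) (use sig lr(1) dP in \<open>auto simp: P_def\<close>)
    qed
    then show "\<exists>l r. l \<in> P \<and> strict_mono r \<and> limitin Mp.mtopology (\<sigma> \<circ> r) l sequentially"
      using lr(1,2) unfolding P_def by blast
  qed
  define Ov where "Ov = (\<lambda>a. {u \<in> P. hh a u > 0})"
  have openO: "openin Mp.mtopology (Ov a)" if a: "a \<in> A" for a
    unfolding Mp.openin_mtopology
  proof (intro conjI allI impI)
    show "Ov a \<subseteq> P" unfolding Ov_def by auto
    fix x assume x: "x \<in> Ov a"
    then have xP: "x \<in> P" and hx: "hh a x > 0" unfolding Ov_def by auto
    obtain \<delta> where dl: "\<delta> > 0" "\<forall>x'\<in>P. pdist t0 t1 n m x' x < \<delta> \<longrightarrow> \<bar>hh a x' - hh a x\<bar> < hh a x"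
      using sc_hh[OF a] xP hx unfolding scont_def by blast
    show "\<exists>r>0. Mp.mball x r \<subseteq> Ov a"
    proof (intro exI[of _ \<delta>] conjI subsetI)
      fix y assume "y \<in> Mp.mball x \<delta>"
      then have yP: "y \<in> P" and "pmetric t0 t1 n m U x y < \<delta>" by auto
      then have "pdist t0 t1 n m y x < \<delta>" using dP[OF xP yP] pdist_commute by metis
      then have "\<bar>hh a y - hh a x\<bar> < hh a x" using dl yP by blast
      then show "y \<in> Ov a" using yP unfolding Ov_def by auto
    qed (use dl in auto)
  qed
  \<comment> \<open>the failure of the conclusion gives an open cover\<close>
  have cover: "\<exists>a\<in>A. hh a u > 0" if u: "u \<in> P" for u
  proof -
    obtain i v where iv: "i \<in> {1..n}" "v \<in> U i"
      "ivl_prec (d i) (payoff t0 t1 x0 f (psi i) (L i) u) (payoff t0 t1 x0 f (psi i) (L i) (u(i := v)))"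
      using neg u unfolding P_def by blast
    have "kk i \<in> {1..d i}" using kk iv(1) by blast
    then have "in_int_Rplus (gH_diff (Fi i (u(i := v))) (Fi i u))"
      using iv(3) unfolding ivl_prec_def Fi_def by blast
    then have "hh (i, v) u > 0" unfolding in_int_gH hh_def lo_def up_def by simp
    moreover have "(i, v) \<in> A" using iv unfolding A_def by simp
    ultimately show ?thesis by blast
  qed
  have "P \<subseteq> \<Union> (Ov ` A)" using cover unfolding Ov_def by blast
  then obtain FF where FF: "finite FF" "FF \<subseteq> Ov ` A" "P \<subseteq> \<Union> FF"
    using comp openO unfolding compactin_def by (metis (no_types, lifting) imageE)
  obtain A' where A': "A' \<subseteq> A" "finite A'" "FF = Ov ` A'"
    using finite_subset_image[OF FF(1,2)] by blast
  define N where "N = card A'"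
  obtain e where e: "bij_betw e {0..<N} A'"
    using ex_bij_betw_nat_finite[OF A'(2)] unfolding N_def by blast
  have eA: "e l \<in> A" if "l < N" for l using e A'(1) that unfolding bij_betw_def by auto
  have cov: "\<exists>l<N. hh (e l) u > 0" if u: "u \<in> P" for u
  proof -
    obtain a where a: "a \<in> A'" "u \<in> Ov a" using FF(3) A'(3) u by blast
    obtain l where "l < N" "e l = a" using e a(1) unfolding bij_betw_def by auto
    then show ?thesis using a(2) unfolding Ov_def by auto
  qed
  \<comment> \<open>finite-dimensional parametrisation\<close>
  define iv where "iv = (\<lambda>l. fst (e l))"
  define V where "V = (\<lambda>l. snd (e l))"
  have ivn: "iv l \<in> {1..n}" if "l < N" for l using eA[OF that] unfolding A_def iv_def by auto
  have VU: "V l \<in> U (iv l)" if "l < N" for l using eA[OF that] unfolding A_def iv_def V_def by auto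
  have eiv: "e l = (iv l, V l)" for l unfolding iv_def V_def by simp
  define ub where "ub = (\<lambda>k. if k \<in> {1..n} then (SOME v. v \<in> U k) else (\<lambda>t j. 0))"
  have ubU: "ub k \<in> U k" if "k \<in> {1..n}" for k
    using that Une[OF that] unfolding ub_def by (simp add: some_in_eq)
  define Ik where "Ik = (\<lambda>k. {l. l < N \<and> iv l = k})"
  have finIk: "finite (Ik k)" for k unfolding Ik_def by auto
  have IkN: "Ik k \<subseteq> {..<N}" for k unfolding Ik_def by auto
  have Ik_empty: "Ik k = {}" if "k \<notin> {1..n}" for k using ivn that unfolding Ik_def by auto
  have Ik_mem: "l \<in> Ik (iv l)" if "l < N" for l using that unfolding Ik_def by auto
  define Dset where "Dset = (\<lambda>x::nat\<Rightarrow>real. (\<forall>l<N. 0 \<le> x l) \<and> (\<forall>k. sum x (Ik k) \<le> 1))"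
  define pi where "pi = (\<lambda>(x::nat\<Rightarrow>real) k t j. (1 - sum x (Ik k)) * ub k t j + (\<Sum>l\<in>Ik k. x l * V l t j))"
  have closedU: "ctrl_comb c x y \<in> U k" if "k \<in> {1..n}" "x \<in> U k" "y \<in> U k" "0 \<le> c" "c \<le> 1" for k c x y
    using cvx[OF that(1)] that(2-5) unfolding convex_ctrl_def ctrl_comb_def by auto
  have piP: "pi x \<in> P" if D: "Dset x" for x
    unfolding P_def profiles_def
  proof (intro CollectI conjI ballI allI impI)
    fix k assume k: "k \<in> {1..n}"
    have "(\<lambda>t j. (1 - sum x (Ik k)) * ub k t j + (\<Sum>l\<in>Ik k. x l * V l t j)) \<in> U k"
    proof (rule conv_comb[where C = "U k"])
      show "\<And>x y c. x \<in> U k \<Longrightarrow> y \<in> U k \<Longrightarrow> 0 \<le> c \<Longrightarrow> c \<le> 1 \<Longrightarrow> ctrl_comb c x y \<in> U k"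
        using closedU k by blast
      show "ub k \<in> U k" by (rule ubU[OF k])
      show "\<And>l. l \<in> Ik k \<Longrightarrow> V l \<in> U k" using VU unfolding Ik_def by auto
      show "\<And>l. l \<in> Ik k \<Longrightarrow> 0 \<le> x l" using D unfolding Dset_def Ik_def by auto
      show "sum x (Ik k) \<le> 1" using D unfolding Dset_def by auto
    qed (rule finIk)
    then show "pi x k \<in> U k" unfolding pi_def by simp
  next
    fix k assume k: "k \<notin> {1..n}"
    have "Ik k = {}" "ub k = (\<lambda>t j. 0)" using Ik_empty[OF k] k by (auto simp: ub_def)
    then show "pi x k = (\<lambda>t j. 0)" unfolding pi_def by simp
  qed
  define Bd where "Bd = (\<Sum>k\<in>{1..n}. M k)"
  have Bd_bound: "\<bar>w t j\<bar> \<le> Bd" if "k \<in> {1..n}" "w \<in> U k" "t \<in> S" for k w t j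
  proof -
    have "\<bar>w t j\<bar> \<le> M k" using ctrl_bound[of t0 t1 "m k" "M k" "U k" w t j] adm that unfolding S_def by auto
    also have "M k \<le> Bd" unfolding Bd_def using that(1) Mpos by (intro member_le_sum) (auto intro: less_imp_le)
    finally show ?thesis .
  qed
  have Bd0: "0 \<le> Bd" unfolding Bd_def using Mpos by (intro sum_nonneg) (auto intro: less_imp_le)
  have pi_cont: "(\<lambda>p. pdist t0 t1 n m (pi (y p)) (pi x)) \<longlonglongrightarrow> 0"
    if Dy: "\<And>p. Dset (y p)" and Dx: "Dset x" and conv: "\<And>l. l < N \<Longrightarrow> (\<lambda>p. y p l) \<longlonglongrightarrow> x l" for y x
  proof -
    define \<delta> where "\<delta> = (\<lambda>p. \<Sum>l<N. \<bar>y p l - x l\<bar>)"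
    define C where "C = (\<Sum>k\<in>{1..n}. real (m k)) * (2 * Bd)"
    have d0: "\<delta> \<longlonglongrightarrow> 0" unfolding \<delta>_def
      by (intro tendsto_null_sum tendsto_rabs_zero LIM_zero conv) auto
    have bnd: "pdist t0 t1 n m (pi (y p)) (pi x) \<le> C * \<delta> p" for p
    proof -
      have "cdist t0 t1 (m k) (pi (y p) k) (pi x k) \<le> real (m k) * (2 * Bd * \<delta> p)" if k: "k \<in> {1..n}" for k
      proof (rule cdist_le_sum[OF t])
        fix t j assume tj: "t \<in> {t0..t1}" "j < m k"
        have "\<bar>pi (y p) k t j - pi x k t j\<bar> \<le> 2 * Bd * (\<Sum>l\<in>Ik k. \<bar>y p l - x l\<bar>)"
          unfolding pi_def
          by (rule comb_diff_bound[OF finIk]) (use Bd_bound k ubU VU tj in \<open>auto simp: S_def Ik_def\<close>)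
        also have "\<dots> \<le> 2 * Bd * \<delta> p"
          unfolding \<delta>_def using Bd0 IkN by (intro mult_left_mono sum_mono2) auto
        finally show "\<bar>pi (y p) k t j - pi x k t j\<bar> \<le> 2 * Bd * \<delta> p" .
      qed
      then have "pdist t0 t1 n m (pi (y p)) (pi x) \<le> (\<Sum>k\<in>{1..n}. real (m k) * (2 * Bd * \<delta> p))"
        unfolding pdist_def by (intro sum_mono) auto
      also have "\<dots> = C * \<delta> p" unfolding C_def by (simp add: sum_distrib_right mult.assoc)
      finally show ?thesis .
    qed
    have "(\<lambda>p. C * \<delta> p) \<longlonglongrightarrow> 0" using tendsto_mult[OF tendsto_const d0, of C] by simp
    then show ?thesis
    proof (rule Lim_null_comparison[rotated])
      show "\<forall>\<^sub>F p in sequentially. norm (pdist t0 t1 n m (pi (y p)) (pi x)) \<le> C * \<delta> p"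
        using bnd pnn[OF piP[OF Dy] piP[OF Dx]] by (intro always_eventually allI) simp
    qed
  qed
  \<comment> \<open>the Nash-type map\<close>
  define \<phi> where "\<phi> = (\<lambda>(x::nat\<Rightarrow>real) l. max 0 (hh (e l) (pi x)))"
  define sm where "sm = (\<lambda>(x::nat\<Rightarrow>real) k. \<Sum>l\<in>Ik k. \<phi> x l)"
  define g where "g = (\<lambda>(x::nat\<Rightarrow>real) l. (x l + \<phi> x l) / (1 + sm x (iv l)))"
  define T where "T = (\<lambda>(x::nat\<Rightarrow>real) k. \<Sum>l\<in>Ik k. max 0 (x l))"
  define \<rho> where "\<rho> = (\<lambda>(x::nat\<Rightarrow>real) l. max 0 (x l) / max 1 (T x (iv l)))"
  define GG where "GG = (\<lambda>x::nat\<Rightarrow>real. g (\<rho> x))"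
  have \<phi>nn: "0 \<le> \<phi> x l" for x l unfolding \<phi>_def by simp
  have smnn: "0 \<le> sm x k" for x k unfolding sm_def using \<phi>nn by (intro sum_nonneg) auto
  have \<rho>D: "Dset (\<rho> x)" for x
    unfolding Dset_def
  proof (intro conjI allI impI)
    fix l show "0 \<le> \<rho> x l" unfolding \<rho>_def by simp
  next
    fix k
    have "sum (\<rho> x) (Ik k) = (\<Sum>l\<in>Ik k. max 0 (x l) / max 1 (T x k))"
      unfolding \<rho>_def by (intro sum.cong) (auto simp: Ik_def)
    also have "\<dots> = T x k / max 1 (T x k)" unfolding T_def by (simp add: sum_divide_distrib)
    also have "\<dots> \<le> 1"
    proof -
      have "0 < max 1 (T x k)" by (simp add: less_max_iff_disj)
      then show ?thesis by (simp add: divide_le_eq_1_pos)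
    qed
    finally show "sum (\<rho> x) (Ik k) \<le> 1" .
  qed
  have \<rho>_id: "\<rho> x l = x l" if D: "Dset x" and l: "l < N" for x l
  proof -
    have "T x (iv l) = sum x (Ik (iv l))"
      unfolding T_def using D IkN unfolding Dset_def by (intro sum.cong) (auto simp: Ik_def)
    then have "T x (iv l) \<le> 1" using D unfolding Dset_def by simp
    moreover have "0 \<le> x l" using D l unfolding Dset_def by simp
    ultimately show ?thesis unfolding \<rho>_def by simp
  qed
  have gsum: "sum (g x) (Ik k) = (sum x (Ik k) + sm x k) / (1 + sm x k)" for x k
  proof -
    have "sum (g x) (Ik k) = (\<Sum>l\<in>Ik k. (x l + \<phi> x l) / (1 + sm x k))"
      unfolding g_def by (intro sum.cong) (auto simp: Ik_def)
    also have "\<dots> = (sum x (Ik k) + sm x k) / (1 + sm x k)"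
      unfolding sm_def by (simp add: sum_divide_distrib[symmetric] sum.distrib)
    finally show ?thesis .
  qed
  have gD: "Dset (g x)" if D: "Dset x" for x
    unfolding Dset_def
  proof (intro conjI allI impI)
    fix l assume "l < N"
    then show "0 \<le> g x l" using D \<phi>nn smnn unfolding Dset_def g_def by (simp add: add_nonneg_nonneg)
  next
    fix k
    have "sum x (Ik k) \<le> 1" using D unfolding Dset_def by simp
    then show "sum (g x) (Ik k) \<le> 1" unfolding gsum using smnn[of x k] by (simp add: divide_le_eq_1)
  qed
  have g_le1: "g x l \<le> 1" if D: "Dset x" and l: "l < N" for x l
  proof -
    have "x l \<le> sum x (Ik (iv l))"
      using D Ik_mem[OF l] finIk unfolding Dset_def by (intro member_le_sum) (auto simp: Ik_def)
    also have "\<dots> \<le> 1" using D unfolding Dset_def by simp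
    finally have "x l \<le> 1" .
    moreover have "\<phi> x l \<le> sm x (iv l)"
      unfolding sm_def using Ik_mem[OF l] finIk \<phi>nn by (intro member_le_sum) auto
    ultimately show ?thesis unfolding g_def using smnn[of x "iv l"] by (simp add: divide_le_eq_1)
  qed
  have maps: "cube N (GG x)" if "cube N x" for x
    unfolding cube_def GG_def using gD[OF \<rho>D] g_le1[OF \<rho>D] unfolding Dset_def by auto
  have contGG: "(\<lambda>p. GG (y p) l) \<longlonglongrightarrow> GG x l"
    if x: "cube N x" and y: "\<And>p. cube N (y p)" and conv: "\<And>l. l < N \<Longrightarrow> (\<lambda>p. y p l) \<longlonglongrightarrow> x l"
      and l: "l < N" for x y l
  proof -
    have Tc: "(\<lambda>p. T (y p) k) \<longlonglongrightarrow> T x k" for k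
      unfolding T_def by (intro tendsto_sum tendsto_max tendsto_const conv) (auto simp: Ik_def)
    have \<rho>c: "(\<lambda>p. \<rho> (y p) l') \<longlonglongrightarrow> \<rho> x l'" if "l' < N" for l'
      unfolding \<rho>_def by (intro tendsto_divide tendsto_max tendsto_const conv Tc that) simp
    have pic: "(\<lambda>p. pdist t0 t1 n m (pi (\<rho> (y p))) (pi (\<rho> x))) \<longlonglongrightarrow> 0"
      by (rule pi_cont[OF \<rho>D \<rho>D \<rho>c])
    have hc: "(\<lambda>p. hh (e l') (pi (\<rho> (y p)))) \<longlonglongrightarrow> hh (e l') (pi (\<rho> x))" if "l' < N" for l'
    proof (rule scont_seq[where S=P and \<phi>="hh (e l')" and y="\<lambda>p. pi (\<rho> (y p))" and x="pi (\<rho> x)"])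
      show "scont (pdist t0 t1 n m) P (hh (e l'))" by (rule sc_hh[OF eA[OF that]])
      show "pi (\<rho> x) \<in> P" by (rule piP[OF \<rho>D])
      show "\<And>p. pi (\<rho> (y p)) \<in> P" by (rule piP[OF \<rho>D])
      show "(\<lambda>p. pdist t0 t1 n m (pi (\<rho> (y p))) (pi (\<rho> x))) \<longlonglongrightarrow> 0" by (rule pic)
    qed
    have \<phi>c: "(\<lambda>p. \<phi> (\<rho> (y p)) l') \<longlonglongrightarrow> \<phi> (\<rho> x) l'" if "l' < N" for l'
      unfolding \<phi>_def by (intro tendsto_max tendsto_const hc that)
    have smc: "(\<lambda>p. sm (\<rho> (y p)) k) \<longlonglongrightarrow> sm (\<rho> x) k" for k
      unfolding sm_def by (intro tendsto_sum \<phi>c) (auto simp: Ik_def)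
    have "(\<lambda>p. g (\<rho> (y p)) l) \<longlonglongrightarrow> g (\<rho> x) l"
      unfolding g_def using smnn[of "\<rho> x" "iv l"]
      by (intro tendsto_divide tendsto_add tendsto_const \<rho>c \<phi>c smc l) simp
    then show ?thesis unfolding GG_def .
  qed
  obtain x where x: "cube N x" "\<forall>l<N. GG x l = x l"
    using brouwer_nat[of N GG, OF maps contGG] by blast
  define lam where "lam = \<rho> x"
  have Dl: "Dset lam" unfolding lam_def by (rule \<rho>D)
  have gx: "g lam l = x l" if "l < N" for l using x(2) that unfolding GG_def lam_def by simp
  have Dx: "Dset x"
    unfolding Dset_def
  proof (intro conjI allI impI)
    fix l assume "l < N" then show "0 \<le> x l" using gx gD[OF Dl] unfolding Dset_def by metis
  next
    fix k
    have "sum x (Ik k) = sum (g lam) (Ik k)" using gx by (intro sum.cong) (auto simp: Ik_def)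
    then show "sum x (Ik k) \<le> 1" using gD[OF Dl] unfolding Dset_def by simp
  qed
  have fix_g: "g lam l = lam l" if "l < N" for l
    using gx[OF that] \<rho>_id[OF Dx that] unfolding lam_def by simp
  define u where "u = pi lam"
  have uP: "u \<in> P" unfolding u_def by (rule piP[OF Dl])
  obtain l0 where l0: "l0 < N" "hh (e l0) u > 0" using cov[OF uP] by blast
  define i where "i = iv l0"
  have i: "i \<in> {1..n}" unfolding i_def by (rule ivn[OF l0(1)])
  have \<phi>l0: "\<phi> lam l0 > 0" unfolding \<phi>_def u_def[symmetric] using l0(2) by simp
  have smpos: "sm lam i > 0"
  proof -
    have "\<phi> lam l0 \<le> sm lam i" unfolding sm_def i_def using Ik_mem[OF l0(1)] finIk \<phi>nn by (intro member_le_sum) auto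
    then show ?thesis using \<phi>l0 by simp
  qed
  have lam_eq: "lam l = \<phi> lam l / sm lam i" if l: "l \<in> Ik i" for l
  proof -
    have lN: "l < N" and ivl: "iv l = i" using l unfolding Ik_def by auto
    have "(lam l + \<phi> lam l) / (1 + sm lam i) = lam l" using fix_g[OF lN] unfolding g_def ivl .
    then have "lam l + \<phi> lam l = lam l * (1 + sm lam i)" using smnn[of lam i] by (simp add: field_simps)
    then have "\<phi> lam l = lam l * sm lam i" by (simp add: algebra_simps)
    then show ?thesis using smpos by simp
  qed
  define Ip where "Ip = {l \<in> Ik i. \<phi> lam l > 0}"
  have finIp: "finite Ip" unfolding Ip_def using finIk by simp
  have l0Ip: "l0 \<in> Ip" unfolding Ip_def using Ik_mem[OF l0(1)] \<phi>l0 by (simp add: i_def)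
  have zero_out: "lam l = 0" if "l \<in> Ik i - Ip" for l
  proof -
    have "\<phi> lam l = 0" using that \<phi>nn[of lam l] unfolding Ip_def by auto
    then show ?thesis using lam_eq that by simp
  qed
  have sum1: "sum lam (Ik i) = 1"
  proof -
    have "sum lam (Ik i) = (\<Sum>l\<in>Ik i. \<phi> lam l / sm lam i)" using lam_eq by (intro sum.cong) auto
    also have "\<dots> = sm lam i / sm lam i" by (simp only: sum_divide_distrib sm_def)
    also have "\<dots> = 1" using smpos by simp
    finally show ?thesis .
  qed
  have IpIk: "Ip \<subseteq> Ik i" unfolding Ip_def by auto
  have sumIp: "sum lam Ip = 1"
    using sum1 sum.mono_neutral_right[OF finIk IpIk, of lam] zero_out by simp
  have ui: "u i = (\<lambda>t j. \<Sum>l\<in>Ip. lam l * V l t j)"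
  proof (intro ext)
    fix t j
    have "u i t j = (\<Sum>l\<in>Ik i. lam l * V l t j)" unfolding u_def pi_def sum1 by simp
    also have "\<dots> = (\<Sum>l\<in>Ip. lam l * V l t j)"
      using sum.mono_neutral_right[OF finIk IpIk, of "\<lambda>l. lam l * V l t j"] zero_out by simp
    finally show "u i t j = (\<Sum>l\<in>Ip. lam l * V l t j)" .
  qed
  define C where "C = {v \<in> U i. lo i u < lo i (u(i := v)) \<and> up i u < up i (u(i := v))}"
  have qc: "gen_quasi_concave ctrl_comb (U i) (\<lambda>v. Fi i (u(i := v)))"
    using kk i uP unfolding Fi_def P_def by blast
  have Cclosed: "ctrl_comb c v1 v2 \<in> C" if "v1 \<in> C" "v2 \<in> C" "0 \<le> c" "c \<le> 1" for c v1 v2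
  proof -
    have v: "v1 \<in> U i" "v2 \<in> U i" using that unfolding C_def by auto
    have c: "c \<in> {0..1}" using that by simp
    have "min (lo i (u(i := v1))) (lo i (u(i := v2))) \<le> lo i (u(i := ctrl_comb c v1 v2))"
      unfolding lo_def using qc_bounds(1)[OF qc v c] .
    moreover have "min (up i (u(i := v1))) (up i (u(i := v2))) \<le> up i (u(i := ctrl_comb c v1 v2))"
      unfolding up_def using qc_bounds(2)[OF qc v c] .
    moreover have "ctrl_comb c v1 v2 \<in> U i" using closedU[OF i v] that by simp
    ultimately show ?thesis using that unfolding C_def by auto
  qed
  have VC: "V l \<in> C" if l: "l \<in> Ip" for l
  proof -
    have lN: "l < N" and ivl: "iv l = i" and ph: "\<phi> lam l > 0" using l unfolding Ip_def Ik_def by auto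
    have "hh (e l) u > 0" using ph unfolding \<phi>_def u_def by simp
    then have "lo i u < lo i (u(i := V l)) \<and> up i u < up i (u(i := V l))"
      unfolding hh_def eiv ivl by simp
    then show ?thesis using VU[OF lN] ivl unfolding C_def by simp
  qed
  have "(\<lambda>t j. \<Sum>l\<in>Ip. lam l * V l t j) \<in> C"
    by (rule conv_comb1[OF Cclosed finIp l0Ip VC _ sumIp]) (use Dl IpIk IkN in \<open>auto simp: Dset_def\<close>)
  then have "u i \<in> C" unfolding ui .
  then have "lo i u < lo i (u(i := u i))" unfolding C_def by simp
  then show False by simp
qed

end
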